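(* Let $\lambda\ne0$, $J\in\mathbb{R}$, $\sigma>0$. Let $X$ solve \[ dX_t=(-X_t+G)\,dt+\lambda\,dB_t, \] where $B$ is a Brownian motion, $G\sim\mathcal{N}(J,\sigma^2)$, and $X_0,G,B$ are independent; and let $Y$ solve \[ dY_t=\Big(-Y_t+J+\lambda\sigma^2\int_0^t\frac{dW_s}{\lambda^2+\sigma^2s}\Big)dt+\lambda\,dW_t, \] where $W$ is a Brownian motion independent of $Y_0$. Assume $X_0$ and $Y_0$ have the same Gaussian distribution. Then $X$ and $Y$ are Gaussian processes with identical means and covariance functions. *)

theory Defs
  imports "HOL-Probability.Probability"
begin

definition real_gaussian :: "'a measure \<Rightarrow> ('a \<Rightarrow> real) \<Rightarrow> bool" where
  "real_gaussian M Z \<longleftrightarrow> Z \<in> borel_measurable M \<and>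
     ((\<exists>c. distr M lborel Z = return lborel c) \<or>
      (\<exists>mu s. s > 0 \<and> distributed M lborel Z (normal_density mu s)))"

text \<open>Gaussian process on time set T: all finite linear combinations are Gaussian
  (equivalently, all finite-dimensional distributions are jointly Gaussian).\<close>
definition gaussian_process :: "'a measure \<Rightarrow> (real \<Rightarrow> 'a \<Rightarrow> real) \<Rightarrow> real set \<Rightarrow> bool" where
  "gaussian_process M X T \<longleftrightarrow>
     (\<forall>F c. finite F \<and> F \<subseteq> T \<longrightarrow> real_gaussian M (\<lambda>\<omega>. \<Sum>t\<in>F. c t * X t \<omega>))"

definition brownian_motion :: "'a measure \<Rightarrow> (real \<Rightarrow> 'a \<Rightarrow> real) \<Rightarrow> bool" where
  "brownian_motion M B \<longleftrightarrow> prob_space M \<and>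
     (\<forall>t. B t \<in> borel_measurable M) \<and>
     (AE \<omega> in M. B 0 \<omega> = 0) \<and>
     (AE \<omega> in M. continuous_on {0..} (\<lambda>t. B t \<omega>)) \<and>
     (\<forall>s t. 0 \<le> s \<and> s < t \<longrightarrow>
        distributed M lborel (\<lambda>\<omega>. B t \<omega> - B s \<omega>) (normal_density 0 (sqrt (t - s)))) \<and>
     (\<forall>(n::nat) (ts::nat \<Rightarrow> real). 0 \<le> ts 0 \<and> (\<forall>i<n. ts i < ts (Suc i)) \<longrightarrow>
        prob_space.indep_vars M (\<lambda>_. borel) (\<lambda>i \<omega>. B (ts (Suc i)) \<omega> - B (ts i) \<omega>) {..<n})"

text \<open>Wiener integral \<open>\<integral>_0^t f(s) dW_s\<close> of a deterministic C^1 integrand f,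
  defined pathwise by integration by parts.\<close>
definition wiener_integral :: "(real \<Rightarrow> real) \<Rightarrow> (real \<Rightarrow> 'a \<Rightarrow> real) \<Rightarrow> real \<Rightarrow> 'a \<Rightarrow> real" where
  "wiener_integral f W t \<omega> =
     f t * W t \<omega> - f 0 * W 0 \<omega> - integral {0..t} (\<lambda>s. deriv f s * W s \<omega>)"

definition path :: "(real \<Rightarrow> 'a \<Rightarrow> real) \<Rightarrow> 'a \<Rightarrow> real \<Rightarrow> real" where
  "path B \<omega> = restrict (\<lambda>t. B t \<omega>) {0..}"

definition indep3_rv :: "'a measure \<Rightarrow> 'b measure \<Rightarrow> ('a \<Rightarrow> 'b) \<Rightarrow> 'c measure \<Rightarrow> ('a \<Rightarrow> 'c)
    \<Rightarrow> 'd measure \<Rightarrow> ('a \<Rightarrow> 'd) \<Rightarrow> bool" where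
  "indep3_rv M M1 Z1 M2 Z2 M3 Z3 \<longleftrightarrow>
     prob_space.indep_sets M (\<lambda>i::nat. if i = 0 then sets (vimage_algebra (space M) Z1 M1)
        else if i = 1 then sets (vimage_algebra (space M) Z2 M2)
        else sets (vimage_algebra (space M) Z3 M3)) {0, 1, 2}"

definition indep2_rv :: "'a measure \<Rightarrow> 'b measure \<Rightarrow> ('a \<Rightarrow> 'b) \<Rightarrow> 'c measure \<Rightarrow> ('a \<Rightarrow> 'c) \<Rightarrow> bool" where
  "indep2_rv M M1 Z1 M2 Z2 \<longleftrightarrow>
     prob_space.indep_set M (sets (vimage_algebra (space M) Z1 M1)) (sets (vimage_algebra (space M) Z2 M2))"

end

theory Submission
  imports Defs
begin

definition gchar :: "real \<Rightarrow> real \<Rightarrow> real \<Rightarrow> complex" where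
  "gchar m v u = iexp (u * m) * complex_of_real (exp (- (v * u\<^sup>2) / 2))"

lemma distr_lborel_borel: "distr M lborel Z = distr M borel Z"
  by (rule distr_cong) auto

lemma char_distr: "Z \<in> borel_measurable M \<Longrightarrow> char (distr M borel Z) u = (CLINT x|M. iexp (u * Z x))"
  by (simp add: char_def integral_distr)

lemma char_normal:
  assumes s: "s > 0"
  shows "char (density lborel (normal_density m s)) u = gchar m (s\<^sup>2) u"
proof -
  interpret S: prob_space std_normal_distribution
    by (simp add: prob_space_normal_density)
  have d: "distributed std_normal_distribution lborel (\<lambda>x. x) std_normal_density"
    unfolding distributed_def by (auto simp: distr_id2)
  have "distributed std_normal_distribution lborel (\<lambda>x. m + s * x) (normal_density (m + s * 0) (\<bar>s\<bar> * 1))"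
    by (rule S.normal_density_affine) (use d s in auto)
  hence eq: "density lborel (normal_density m s) = distr std_normal_distribution borel (\<lambda>x. m + s * x)"
    using s by (simp add: distributed_def distr_lborel_borel)
  have "char (density lborel (normal_density m s)) u = (CLINT x|std_normal_distribution. iexp (u * (m + s * x)))"
    unfolding eq by (subst char_distr) auto
  also have "\<dots> = (CLINT x|std_normal_distribution. iexp (u * m) * iexp ((u * s) * x))"
    by (intro Bochner_Integration.integral_cong) (auto simp: algebra_simps simp flip: exp_add)
  also have "\<dots> = iexp (u * m) * char std_normal_distribution (u * s)"
    unfolding char_def by simp
  also have "\<dots> = gchar m (s\<^sup>2) u"
    by (simp add: char_std_normal_distribution gchar_def power_mult_distrib mult_ac)
  finally show ?thesis .
qed

lemma char_return: "char (return borel m) u = iexp (u * m)"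
  unfolding char_def by (subst integral_return) auto

lemma gauss_from_char:
  assumes M: "prob_space M" and Z: "Z \<in> borel_measurable M" and v: "v \<ge> 0"
    and ch: "\<And>u. char (distr M borel Z) u = gchar m v u"
  shows "real_gaussian M Z \<and> integrable M Z \<and> integrable M (\<lambda>x. (Z x)\<^sup>2) \<and>
         (\<integral>x. Z x \<partial>M) = m \<and> (\<integral>x. (Z x)\<^sup>2 \<partial>M) = v + m\<^sup>2"
proof -
  interpret prob_space M by (rule M)
  have rd: "real_distribution (distr M borel Z)"
    using Z by (auto simp: real_distribution_def real_distribution_axioms_def intro!: prob_space_distr)
  show ?thesis
  proof (cases "v = 0")
    case True
    have rd2: "real_distribution (return borel m)"
      by (auto simp: real_distribution_def real_distribution_axioms_def intro!: prob_space_return)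
    have eq: "distr M borel Z = return borel m"
      by (rule Levy_uniqueness[OF rd rd2]) (auto simp: ch char_return gchar_def True)
    have "emeasure (distr M borel Z) {m} = 1"
      unfolding eq by simp
    hence "emeasure M (Z -` {m} \<inter> space M) = 1"
      using Z by (simp add: emeasure_distr)
    hence ae: "AE x in M. Z x = m"
      using Z by (subst AE_iff_measurable[where N="space M - (Z -` {m} \<inter> space M)"])
        (auto simp: emeasure_compl prob_space emeasure_space_1)
    have g: "real_gaussian M Z"
      unfolding real_gaussian_def using Z eq by (auto simp: distr_lborel_borel return_cong[of lborel borel])
    have i1: "integrable M Z"
      by (rule integrable_cong_AE_imp[where g="\<lambda>_. m"]) (use Z ae in \<open>auto elim: AE_mp\<close>)
    have i2: "integrable M (\<lambda>x. (Z x)\<^sup>2)"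
      by (rule integrable_cong_AE_imp[where g="\<lambda>_. m\<^sup>2"]) (use Z ae in \<open>auto elim: AE_mp\<close>)
    have e1: "(\<integral>x. Z x \<partial>M) = m"
      using integral_cong_AE[of Z M "\<lambda>_. m"] Z ae by (simp add: prob_space)
    have e2: "(\<integral>x. (Z x)\<^sup>2 \<partial>M) = m\<^sup>2"
      proof -
      have "AE x in M. (Z x)\<^sup>2 = m\<^sup>2" using ae by eventually_elim simp
      thus ?thesis using integral_cong_AE[of "\<lambda>x. (Z x)\<^sup>2" M "\<lambda>_. m\<^sup>2"] Z by (simp add: prob_space)
    qed
    show ?thesis using g i1 i2 e1 e2 True by simp
  next
    case False
    define s where "s = sqrt v"
    have s: "s > 0" using v False by (simp add: s_def)
    have rd2: "real_distribution (density lborel (normal_density m s))"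
      by (auto simp: real_distribution_def real_distribution_axioms_def intro!: prob_space_normal_density s)
    have eq: "distr M borel Z = density lborel (normal_density m s)"
      by (rule Levy_uniqueness[OF rd rd2]) (use s v in \<open>auto simp: ch char_normal s_def\<close>)
    have D: "distributed M lborel Z (normal_density m s)"
      unfolding distributed_def using Z eq by (auto simp: distr_lborel_borel)
    have g: "real_gaussian M Z"
      unfolding real_gaussian_def using Z D s by auto
    have i1: "integrable M Z"
      using distributed_integrable[OF D, of "\<lambda>x. x"] integrable_normal_moment_nz_1 using s by auto
    have i2: "integrable M (\<lambda>x. (Z x)\<^sup>2)"
    proof -
      have "integrable lborel (\<lambda>x. normal_density m s x * (x - m)^2)"
        by (rule integrable_normal_moment[OF s])
      moreover have "integrable lborel (\<lambda>x. (2 * m) * (normal_density m s x * x) - m\<^sup>2 * normal_density m s x)"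
        using integrable_normal_moment_nz_1[OF s, of m] integrable_normal_density[OF s, of m]
        by (intro Bochner_Integration.integrable_diff integrable_mult_right)
      hence "integrable lborel (\<lambda>x. normal_density m s x * (2 * m * x - m\<^sup>2))"
        by (simp add: algebra_simps)
      ultimately have "integrable lborel (\<lambda>x. normal_density m s x * (x - m)^2 + normal_density m s x * (2 * m * x - m\<^sup>2))"
        by (rule Bochner_Integration.integrable_add)
      hence "integrable lborel (\<lambda>x. normal_density m s x * x\<^sup>2)"
        by (simp add: power2_eq_square algebra_simps)
      thus ?thesis using distributed_integrable[OF D, of "\<lambda>x. x\<^sup>2"] by auto
    qed
    have e1: "(\<integral>x. Z x \<partial>M) = m"
      using normal_distributed_expectation[OF s D] by simp
    have var: "variance Z = s\<^sup>2" by (rule normal_distributed_variance[OF s D])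
    have "variance Z = (\<integral>x. (Z x)\<^sup>2 \<partial>M) - m\<^sup>2"
      using variance_eq[OF i1 i2] e1 by simp
    hence e2: "(\<integral>x. (Z x)\<^sup>2 \<partial>M) = v + m\<^sup>2"
      using var v by (simp add: s_def)
    show ?thesis using g i1 i2 e1 e2 by simp
  qed
qed

lemma char_scale:
  assumes "Z \<in> borel_measurable M"
  shows "char (distr M borel (\<lambda>x. c * Z x)) u = char (distr M borel Z) (u * c)"
  using assms by (simp add: char_distr mult_ac)

lemma grid_mono:
  assumes "\<forall>i<n. x i < (x (Suc i) :: real)" "j \<le> k" "k \<le> n"
  shows "x j \<le> x k"
  using assms(2,3)
proof (induction k)
  case 0 thus ?case by simp
next
  case (Suc k)
  show ?case
  proof (cases "j = Suc k")
    case False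
    hence "x j \<le> x k" using Suc by simp
    also have "x k < x (Suc k)" using assms(1) Suc.prems by simp
    finally show ?thesis by simp
  qed simp
qed

lemma grid_strict:
  assumes "\<forall>i<n. x i < (x (Suc i) :: real)" "j < k" "k \<le> n"
  shows "x j < x k"
proof -
  have "x j < x (Suc j)" using assms by auto
  also have "x (Suc j) \<le> x k" using grid_mono[OF assms(1)] assms by auto
  finally show ?thesis .
qed

lemma bm_incr_char:
  assumes B: "brownian_motion M B" and x: "\<forall>i<n. x i < x (Suc i)" "0 \<le> x 0"
  shows "char (distr M borel (\<lambda>\<omega>. \<Sum>k<n. \<gamma> k * (B (x (Suc k)) \<omega> - B (x k) \<omega>))) u
         = gchar 0 (\<Sum>k<n. (\<gamma> k)\<^sup>2 * (x (Suc k) - x k)) u"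
proof -
  interpret prob_space M using B by (simp add: brownian_motion_def)
  have meas: "\<And>t. B t \<in> borel_measurable M" using B by (simp add: brownian_motion_def)
  have ind: "indep_vars (\<lambda>_. borel) (\<lambda>i \<omega>. B (x (Suc i)) \<omega> - B (x i) \<omega>) {..<n}"
    using B x unfolding brownian_motion_def by blast
  have ind2: "indep_vars (\<lambda>_. borel) (\<lambda>i \<omega>. \<gamma> i * (B (x (Suc i)) \<omega> - B (x i) \<omega>)) {..<n}"
    using indep_vars_compose2[OF ind, of "\<lambda>i y. \<gamma> i * y" "\<lambda>_. borel"] by simp
  have each: "char (distr M borel (\<lambda>\<omega>. \<gamma> k * (B (x (Suc k)) \<omega> - B (x k) \<omega>))) u
     = complex_of_real (exp (- ((\<gamma> k)\<^sup>2 * (x (Suc k) - x k) * u\<^sup>2) / 2))" if k: "k < n" for k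
  proof -
    have lt: "x k < x (Suc k)" using x k by auto
    have x0: "0 \<le> x k" using grid_mono[OF x(1), of 0 k] x k by auto
    have D: "distributed M lborel (\<lambda>\<omega>. B (x (Suc k)) \<omega> - B (x k) \<omega>) (normal_density 0 (sqrt (x (Suc k) - x k)))"
      using B lt x0 unfolding brownian_motion_def by auto
    have s: "sqrt (x (Suc k) - x k) > 0" using lt by simp
    have "char (distr M borel (\<lambda>\<omega>. \<gamma> k * (B (x (Suc k)) \<omega> - B (x k) \<omega>))) u
        = char (distr M borel (\<lambda>\<omega>. B (x (Suc k)) \<omega> - B (x k) \<omega>)) (u * \<gamma> k)"
      by (rule char_scale) (use meas in auto)
    also have "\<dots> = char (density lborel (normal_density 0 (sqrt (x (Suc k) - x k)))) (u * \<gamma> k)"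
      using D by (simp add: distributed_def distr_lborel_borel)
    also have "\<dots> = gchar 0 ((sqrt (x (Suc k) - x k))\<^sup>2) (u * \<gamma> k)"
      by (rule char_normal[OF s])
    also have "\<dots> = complex_of_real (exp (- ((\<gamma> k)\<^sup>2 * (x (Suc k) - x k) * u\<^sup>2) / 2))"
      using lt by (simp add: gchar_def power_mult_distrib mult_ac)
    finally show ?thesis .
  qed
  have "char (distr M borel (\<lambda>\<omega>. \<Sum>k<n. \<gamma> k * (B (x (Suc k)) \<omega> - B (x k) \<omega>))) u
      = (\<Prod>k<n. char (distr M borel (\<lambda>\<omega>. \<gamma> k * (B (x (Suc k)) \<omega> - B (x k) \<omega>))) u)"
    by (rule char_distr_sum[OF ind2])
  also have "\<dots> = (\<Prod>k<n. complex_of_real (exp (- ((\<gamma> k)\<^sup>2 * (x (Suc k) - x k) * u\<^sup>2) / 2)))"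
    by (rule prod.cong) (auto simp: each)
  also have "\<dots> = complex_of_real (exp (\<Sum>k<n. - ((\<gamma> k)\<^sup>2 * (x (Suc k) - x k) * u\<^sup>2) / 2))"
    by (simp add: exp_sum)
  also have "\<dots> = gchar 0 (\<Sum>k<n. (\<gamma> k)\<^sup>2 * (x (Suc k) - x k)) u"
    unfolding gchar_def by (simp add: sum_divide_distrib[symmetric] sum_distrib_right sum_negf)
  finally show ?thesis .
qed

lemma uniform_gap:
  fixes T y d :: real
  assumes T: "T > 0" and y: "0 \<le> y" "y < T" and N: "N > 0"
  shows "\<exists>j\<le>N. y < T * real j / real N \<and> T * real j / real N \<le> y + T / real N"
proof -
  define j where "j = nat (floor (y * N / T)) + 1"
  have f0: "floor (y * N / T) \<ge> 0" using T y N by simp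
  have a: "real_of_int (floor (y * N / T)) \<le> y * N / T" by (rule of_int_floor_le)
  have b: "y * N / T < real_of_int (floor (y * N / T)) + 1" by (rule real_of_int_floor_add_one_gt)
  have jr: "real j = real_of_int (floor (y * N / T)) + 1" using f0 by (simp add: j_def)
  have yN: "y * N / T < N" using y T N by (simp add: field_simps)
  have "floor (y * N / T) < int N" using yN by linarith
  hence jN: "j \<le> N" using f0 by (simp add: j_def) linarith
  have "y < T * real j / real N"
  proof -
    have "y * N / T < real j" using b jr by simp
    thus ?thesis using T N by (simp add: field_simps)
  qed
  moreover have "T * real j / real N \<le> y + T / real N"
  proof -
    have "real j \<le> y * N / T + 1" using a jr by simp
    hence "T * real j \<le> T * (y * N / T + 1)" using T by (intro mult_left_mono) auto
    also have "\<dots> = y * N + T" using T by (simp add: field_simps)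
    finally show ?thesis using N by (simp add: field_simps)
  qed
  ultimately show ?thesis using jN by blast
qed

lemma grid_exists:
  fixes T d :: real
  assumes F: "finite F" "F \<subseteq> {0..T}" and T: "T \<ge> 0" and d: "d > 0"
  shows "\<exists>n x. x 0 = 0 \<and> x n = T \<and> (\<forall>i<n. x i < x (Suc i)) \<and> (\<forall>i<n. x (Suc i) - x i \<le> d)
              \<and> (\<forall>t\<in>F. \<exists>k\<le>n. x k = t)"
proof -
  obtain N :: nat where N: "N > 0" "T / real N \<le> d"
  proof -
    obtain N :: nat where "T / d < N" using reals_Archimedean2 by blast
    have Npos: "N > 0"
    proof (rule ccontr)
      assume "\<not> N > 0" hence "N = 0" by simp
      moreover have "0 \<le> T / d" using d T by simp
      ultimately show False using \<open>T / d < N\<close> by simp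
    qed
    have "T < d * N" using \<open>T / d < N\<close> d by (simp add: divide_less_eq mult.commute)
    hence "T / real N \<le> d" using Npos by (simp add: divide_le_eq mult.commute)
    thus ?thesis using that Npos by blast
  qed
  define P where "P = F \<union> {0, T} \<union> (\<lambda>j. T * real j / real N) ` {..N}"
  have Pfin: "finite P" using F by (simp add: P_def)
  have Psub: "P \<subseteq> {0..T}"
  proof -
    have "T * real j / real N \<in> {0..T}" if "j \<le> N" for j
      using that T N by (auto simp: field_simps intro!: mult_left_mono)
    thus ?thesis using F T by (auto simp: P_def)
  qed
  define xs where "xs = sorted_list_of_set P"
  have setxs: "set xs = P" using Pfin by (simp add: xs_def)
  have ss: "sorted_wrt (<) xs" by (simp add: xs_def strict_sorted_list_of_set)
  define n where "n = length xs - 1"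
  define x where "x k = xs ! k" for k
  have len: "length xs = Suc n" using setxs by (cases xs) (auto simp: n_def P_def)
  have strict: "x i < x j" if "i < j" "j \<le> n" for i j
    using ss that len by (auto simp: x_def sorted_wrt_iff_nth_less)
  have inP: "x i \<in> P" if "i \<le> n" for i using that len setxs by (auto simp: x_def)
  have memP: "\<exists>k\<le>n. x k = p" if "p \<in> P" for p
    using that setxs len by (auto simp: x_def in_set_conv_nth less_Suc_eq_le)
  have x0: "x 0 = 0"
  proof -
    obtain k where k: "k \<le> n" "x k = 0" using memP[of 0] by (auto simp: P_def)
    have "x 0 \<le> x k" using strict[of 0 k] k by (cases "k = 0") auto
    moreover have "x 0 \<ge> 0" using inP[of 0] Psub by auto
    ultimately show ?thesis using k by simp
  qed
  have xn: "x n = T"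
  proof -
    obtain k where k: "k \<le> n" "x k = T" using memP[of T] by (auto simp: P_def)
    have "x k \<le> x n" using strict[of k n] k by (cases "k = n") auto
    moreover have "x n \<le> T" using inP[of n] Psub by auto
    ultimately show ?thesis using k by simp
  qed
  have gap: "x (Suc i) - x i \<le> d" if i: "i < n" for i
  proof -
    have Tpos: "T > 0" using strict[of 0 n] i x0 xn by simp
    have y: "0 \<le> x i" "x i < T" using inP[of i] Psub strict[of i n] i xn by auto
    obtain j where j: "j \<le> N" "x i < T * real j / real N" "T * real j / real N \<le> x i + T / real N"
      using uniform_gap[OF Tpos y N(1)] by blast
    have "T * real j / real N \<in> P" using j by (auto simp: P_def)
    then obtain l where l: "l \<le> n" "x l = T * real j / real N" using memP by blast
    have "i < l"
    proof (rule ccontr)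
      assume "\<not> i < l"
      hence "x l \<le> x i" using strict[of l i] i by (cases "l = i") auto
      thus False using l j by simp
    qed
    hence "x (Suc i) \<le> x l" using strict[of "Suc i" l] l by (cases "Suc i = l") auto
    thus ?thesis using l j N by simp
  qed
  show ?thesis
    apply (rule exI[of _ n], rule exI[of _ x])
    using x0 xn strict gap memP by (auto simp: P_def)
qed

lemma integral_grid_split:
  fixes f :: "real \<Rightarrow> real"
  assumes x: "\<forall>i<n. x i < x (Suc i)" and ab: "a \<le> b" "b \<le> n"
    and f: "continuous_on {x a..x b} f"
  shows "integral {x a..x b} f = (\<Sum>i\<in>{a..<b}. integral {x i..x (Suc i)} f)"
  using ab f
proof (induction b)
  case 0 thus ?case by simp
next
  case (Suc b)
  show ?case
  proof (cases "a = Suc b")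
    case True thus ?thesis by simp
  next
    case False
    hence ab': "a \<le> b" using Suc by simp
    have m1: "x a \<le> x b" using grid_mono[OF x ab'] Suc by simp
    have m2: "x b \<le> x (Suc b)" using x Suc by (simp add: less_imp_le)
    have cont: "continuous_on {x a..x b} f"
      by (rule continuous_on_subset[OF Suc.prems(3)]) (use m2 in auto)
    have "integral {x a..x (Suc b)} f = integral {x a..x b} f + integral {x b..x (Suc b)} f"
      by (rule Henstock_Kurzweil_Integration.integral_combine[symmetric, OF m1 m2])
         (rule integrable_continuous_interval[OF Suc.prems(3)])
    also have "\<dots> = (\<Sum>i\<in>{a..<b}. integral {x i..x (Suc i)} f) + integral {x b..x (Suc b)} f"
      using Suc.IH[OF ab' _ cont] Suc.prems by simp
    also have "\<dots> = (\<Sum>i\<in>{a..<Suc b}. integral {x i..x (Suc i)} f)"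
      using ab' by simp
    finally show ?thesis .
  qed
qed

lemma riemann_tag_bound:
  fixes h g :: "real \<Rightarrow> real"
  assumes x: "\<forall>i<n. x i < x (Suc i)" and j: "j \<le> n"
    and mesh: "\<forall>i<n. x (Suc i) - x i \<le> d"
    and h: "continuous_on {x 0..x j} h" and g: "continuous_on {x 0..x j} g"
    and H: "\<And>w. w \<in> {x 0..x j} \<Longrightarrow> \<bar>h w\<bar> \<le> H"
    and tag: "\<And>k. k < j \<Longrightarrow> x k \<le> y k \<and> y k \<le> x (Suc k)"
    and unif: "\<And>a b. a \<in> {x 0..x j} \<Longrightarrow> b \<in> {x 0..x j} \<Longrightarrow> \<bar>a - b\<bar> \<le> d \<Longrightarrow> \<bar>g a - g b\<bar> \<le> e"
  shows "\<bar>(\<Sum>k<j. integral {x k..x (Suc k)} h * g (y k)) - integral {x 0..x j} (\<lambda>w. h w * g w)\<bar>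
          \<le> e * H * (x j - x 0)"
proof -
  have hg: "continuous_on {x 0..x j} (\<lambda>w. h w * g w)" using h g by (intro continuous_intros)
  have split: "integral {x 0..x j} (\<lambda>w. h w * g w) = (\<Sum>k<j. integral {x k..x (Suc k)} (\<lambda>w. h w * g w))"
    using integral_grid_split[OF x _ j hg] by (simp add: atLeast0LessThan)
  have cell: "\<bar>integral {x k..x (Suc k)} h * g (y k) - integral {x k..x (Suc k)} (\<lambda>w. h w * g w)\<bar>
      \<le> e * H * (x (Suc k) - x k)" if k: "k < j" for k
  proof -
    have lt: "x k < x (Suc k)" using x k j by auto
    have sub: "{x k..x (Suc k)} \<subseteq> {x 0..x j}"
      using grid_mono[OF x, of 0 k] grid_mono[OF x, of "Suc k" j] k j by auto
    have hc: "continuous_on {x k..x (Suc k)} h" using continuous_on_subset[OF h sub] .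
    have hgc: "continuous_on {x k..x (Suc k)} (\<lambda>w. h w * g w)" using continuous_on_subset[OF hg sub] .
    have i1: "(\<lambda>w. g (y k) * h w) integrable_on {x k..x (Suc k)}"
      using integrable_on_cmult_left[OF integrable_continuous_interval[OF hc], of "g (y k)"] by simp
    have "integral {x k..x (Suc k)} (\<lambda>w. h w * (g (y k) - g w))
        = integral {x k..x (Suc k)} (\<lambda>w. g (y k) * h w - h w * g w)"
      by (simp add: algebra_simps)
    also have "\<dots> = integral {x k..x (Suc k)} (\<lambda>w. g (y k) * h w) - integral {x k..x (Suc k)} (\<lambda>w. h w * g w)"
      by (rule integral_diff[OF i1 integrable_continuous_interval[OF hgc]])
    also have "integral {x k..x (Suc k)} (\<lambda>w. g (y k) * h w) = g (y k) * integral {x k..x (Suc k)} h"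
      by simp
    finally have "integral {x k..x (Suc k)} h * g (y k) - integral {x k..x (Suc k)} (\<lambda>w. h w * g w)
        = integral {x k..x (Suc k)} (\<lambda>w. h w * (g (y k) - g w))" by (simp add: mult_ac)
    also have "\<bar>\<dots>\<bar> \<le> (H * e) * (x (Suc k) - x k)"
    proof -
      have "norm (integral {x k..x (Suc k)} (\<lambda>w. h w * (g (y k) - g w))) \<le> (H * e) * (x (Suc k) - x k)"
      proof (rule integral_bound)
        show "x k \<le> x (Suc k)" using lt by simp
        show "continuous_on {x k..x (Suc k)} (\<lambda>w. h w * (g (y k) - g w))"
          using hc continuous_on_subset[OF g sub] by (intro continuous_intros)
        fix w assume w: "w \<in> {x k..x (Suc k)}"
        have yk: "x k \<le> y k" "y k \<le> x (Suc k)" using tag k by auto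
        have "x (Suc k) - x k \<le> d" using mesh k j by auto
        hence d1: "\<bar>y k - w\<bar> \<le> d" using w yk by auto
        have "\<bar>g (y k) - g w\<bar> \<le> e" using unif[OF _ _ d1] sub w yk by auto
        moreover have "\<bar>h w\<bar> \<le> H" using H sub w by auto
        ultimately show "norm (h w * (g (y k) - g w)) \<le> H * e"
          by (simp add: abs_mult mult_mono')
      qed
      thus ?thesis by simp
    qed
    finally show ?thesis by (simp add: mult_ac)
  qed
  have "\<bar>(\<Sum>k<j. integral {x k..x (Suc k)} h * g (y k)) - integral {x 0..x j} (\<lambda>w. h w * g w)\<bar>
      = \<bar>\<Sum>k<j. integral {x k..x (Suc k)} h * g (y k) - integral {x k..x (Suc k)} (\<lambda>w. h w * g w)\<bar>"
    by (simp add: split sum_subtractf)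
  also have "\<dots> \<le> (\<Sum>k<j. \<bar>integral {x k..x (Suc k)} h * g (y k) - integral {x k..x (Suc k)} (\<lambda>w. h w * g w)\<bar>)"
    by (rule sum_abs)
  also have "\<dots> \<le> (\<Sum>k<j. e * H * (x (Suc k) - x k))"
    by (rule sum_mono) (rule cell, simp)
  also have "\<dots> = e * H * (x j - x 0)"
    by (simp add: sum_distrib_left[symmetric] sum_lessThan_telescope)
  finally show ?thesis .
qed

lemma sum_by_parts_grid:
  fixes Q a :: "nat \<Rightarrow> real"
  shows "(\<Sum>k<j. (\<alpha> + (\<Sum>i\<in>{k..<j}. Q i)) * (a (Suc k) - a k))
       = \<alpha> * (a j - a 0) + (\<Sum>i<j. Q i * (a (Suc i) - a 0))"
proof (induction j)
  case 0 thus ?case by simp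
next
  case (Suc j)
  have e1: "(\<Sum>k<j. (\<alpha> + (\<Sum>i\<in>{k..<Suc j}. Q i)) * (a (Suc k) - a k))
      = (\<Sum>k<j. (\<alpha> + (\<Sum>i\<in>{k..<j}. Q i)) * (a (Suc k) - a k) + Q j * (a (Suc k) - a k))"
    by (rule sum.cong) (auto simp: algebra_simps)
  have "(\<Sum>k<Suc j. (\<alpha> + (\<Sum>i\<in>{k..<Suc j}. Q i)) * (a (Suc k) - a k))
      = (\<Sum>k<j. (\<alpha> + (\<Sum>i\<in>{k..<j}. Q i)) * (a (Suc k) - a k)) + Q j * (\<Sum>k<j. a (Suc k) - a k)
        + (\<alpha> + Q j) * (a (Suc j) - a j)"
    by (simp only: sum.lessThan_Suc e1 sum.distrib sum_distrib_left) simp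
  also have "\<dots> = \<alpha> * (a (Suc j) - a 0) + (\<Sum>i<Suc j. Q i * (a (Suc i) - a 0))"
    using Suc.IH by (simp add: sum_lessThan_telescope algebra_simps)
  finally show ?case .
qed

lemma cont_bound:
  fixes h :: "real \<Rightarrow> real"
  assumes "continuous_on {a..b} h"
  obtains H where "H \<ge> 0" "\<And>w. w \<in> {a..b} \<Longrightarrow> \<bar>h w\<bar> \<le> H"
proof -
  have "bounded (h ` {a..b})"
    by (rule compact_imp_bounded[OF compact_continuous_image[OF assms compact_Icc]])
  then obtain H where "\<forall>y\<in>h ` {a..b}. norm y \<le> H" by (auto simp: bounded_iff)
  hence "\<And>w. w \<in> {a..b} \<Longrightarrow> \<bar>h w\<bar> \<le> max H 0" by force
  thus ?thesis using that[of "max H 0"] by simp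
qed

lemma grid_limit:
  fixes h g :: "real \<Rightarrow> real"
  assumes grid: "\<And>m. xx m 0 = 0 \<and> (\<forall>i<nn m. xx m i < xx m (Suc i)) \<and> (\<forall>i<nn m. xx m (Suc i) - xx m i \<le> 1 / (real m + 1))"
    and j: "\<And>m. j m \<le> nn m \<and> xx m (j m) = L"
    and h: "continuous_on {0..L} h" and g: "continuous_on {0..L} g"
    and tag: "\<And>m k. k < j m \<Longrightarrow> xx m k \<le> y m k \<and> y m k \<le> xx m (Suc k)"
  shows "(\<lambda>m. \<Sum>k<j m. integral {xx m k..xx m (Suc k)} h * g (y m k)) \<longlonglongrightarrow> integral {0..L} (\<lambda>w. h w * g w)"
proof (rule LIMSEQ_I)
  fix r :: real assume r: "r > 0"
  have L0: "L \<ge> 0" using grid_mono[of "nn 0" "xx 0" 0 "j 0"] grid[of 0] j[of 0] by auto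
  obtain H where H: "H \<ge> 0" "\<And>w. w \<in> {0..L} \<Longrightarrow> \<bar>h w\<bar> \<le> H" using cont_bound[OF h] by blast
  define e where "e = r / (2 * (H + 1) * (L + 1))"
  have e: "e > 0" using r H L0 by (simp add: e_def)
  have uc: "uniformly_continuous_on {0..L} g" by (rule compact_uniformly_continuous[OF g compact_Icc])
  obtain d where d: "d > 0" "\<And>a b. a \<in> {0..L} \<Longrightarrow> b \<in> {0..L} \<Longrightarrow> dist b a < d \<Longrightarrow> dist (g b) (g a) < e"
    using uc e unfolding uniformly_continuous_on_def by metis
  obtain no :: nat where no: "1 / (real no + 1) < d"
  proof -
    obtain k :: nat where "1 / d < k" using reals_Archimedean2 by blast
    hence "1 / d < real k + 1" by linarith
    hence "1 < d * (real k + 1)" using d by (simp add: divide_less_eq mult.commute)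
    hence "1 / (real k + 1) < d" by (simp add: divide_less_eq mult.commute)
    thus ?thesis using that by blast
  qed
  show "\<exists>no. \<forall>m\<ge>no. norm ((\<Sum>k<j m. integral {xx m k..xx m (Suc k)} h * g (y m k)) - integral {0..L} (\<lambda>w. h w * g w)) < r"
  proof (intro exI allI impI)
    fix m assume m: "m \<ge> no"
    have md: "1 / (real m + 1) < d"
    proof -
      have "1 / (real m + 1) \<le> 1 / (real no + 1)" using m by (simp add: frac_le)
      thus ?thesis using no by simp
    qed
    have x0: "xx m 0 = 0" and xs: "\<forall>i<nn m. xx m i < xx m (Suc i)"
      and mesh: "\<forall>i<nn m. xx m (Suc i) - xx m i \<le> 1 / (real m + 1)" using grid[of m] by auto
    have bnd: "\<bar>(\<Sum>k<j m. integral {xx m k..xx m (Suc k)} h * g (y m k)) - integral {xx m 0..xx m (j m)} (\<lambda>w. h w * g w)\<bar>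
          \<le> e * H * (xx m (j m) - xx m 0)"
    proof (rule riemann_tag_bound[OF xs _ mesh])
      show "j m \<le> nn m" using j by auto
      show "continuous_on {xx m 0..xx m (j m)} h" using h x0 j[of m] by simp
      show "continuous_on {xx m 0..xx m (j m)} g" using g x0 j[of m] by simp
      show "\<And>w. w \<in> {xx m 0..xx m (j m)} \<Longrightarrow> \<bar>h w\<bar> \<le> H" using H x0 j[of m] by simp
      show "\<And>k. k < j m \<Longrightarrow> xx m k \<le> y m k \<and> y m k \<le> xx m (Suc k)" by (rule tag)
      fix a b assume ab: "a \<in> {xx m 0..xx m (j m)}" "b \<in> {xx m 0..xx m (j m)}" "\<bar>a - b\<bar> \<le> 1 / (real m + 1)"
      have "dist b a < d" using ab(3) md by (simp add: dist_real_def abs_minus_commute)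
      hence "dist (g b) (g a) < e" using d(2)[of a b] ab x0 j[of m] by simp
      thus "\<bar>g a - g b\<bar> \<le> e" by (simp add: dist_real_def abs_minus_commute)
    qed
    hence bnd': "\<bar>(\<Sum>k<j m. integral {xx m k..xx m (Suc k)} h * g (y m k)) - integral {0..L} (\<lambda>w. h w * g w)\<bar> \<le> e * H * L"
      using x0 j[of m] by simp
    have "e * H * L < r"
    proof -
      have "e * H * L = r * (H * L) / (2 * (H + 1) * (L + 1))" by (simp add: e_def)
      also have "\<dots> < r"
      proof -
        have "H * L \<le> (H + 1) * (L + 1)" using H L0 by (intro mult_mono) auto
        moreover have "(H + 1) * (L + 1) > 0" using H L0 by simp
        ultimately have "H * L < 2 * (H + 1) * (L + 1)" by linarith
        hence "r * (H * L) < r * (2 * (H + 1) * (L + 1))" using r by simp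
        thus ?thesis using H L0 by (simp add: divide_less_eq)
      qed
      finally show ?thesis .
    qed
    thus "norm ((\<Sum>k<j m. integral {xx m k..xx m (Suc k)} h * g (y m k)) - integral {0..L} (\<lambda>w. h w * g w)) < r"
      using bnd' by simp
  qed
qed

definition kern :: "real \<Rightarrow> (real \<Rightarrow> real \<Rightarrow> real) \<Rightarrow> real \<Rightarrow> real \<Rightarrow> real" where
  "kern \<alpha> q t w = \<alpha> + integral {w..t} (q t)"

lemma kern_cont:
  assumes "continuous_on {0..t} (q t)"
  shows "continuous_on {0..t} (kern \<alpha> q t)"
  unfolding kern_def
  by (intro continuous_intros indefinite_integral_continuous_1' integrable_continuous_interval assms)

lemma sum_if_less:
  assumes "j \<le> (n::nat)"
  shows "(\<Sum>k<n. if k < j then f k else 0) = (\<Sum>k<j. f k)"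
proof -
  have "(\<Sum>k<n. if k < j then f k else 0) = (\<Sum>k<j. if k < j then f k else 0)"
    by (rule sum.mono_neutral_right) (use assms in auto)
  thus ?thesis by simp
qed

lemma main_char:
  fixes M :: "'a measure" and B :: "real \<Rightarrow> 'a \<Rightarrow> real" and F :: "real set"
    and c :: "real \<Rightarrow> real" and q :: "real \<Rightarrow> real \<Rightarrow> real" and \<alpha> :: real and I Z :: "'a \<Rightarrow> real"
  assumes B: "brownian_motion M B"
    and F: "finite F" "F \<subseteq> {0..}"
    and q: "\<And>t. t \<in> F \<Longrightarrow> continuous_on {0..t} (q t)"
    and Imeas: "I \<in> borel_measurable M" and Zmeas: "Z \<in> borel_measurable M"
    and Zeq: "AE \<omega> in M. Z \<omega> = I \<omega> + (\<Sum>t\<in>F. c t * (\<alpha> * B t \<omega> + integral {0..t} (\<lambda>w. q t w * B w \<omega>)))"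
    and ind: "\<And>n x \<gamma>. (\<forall>i<n. x i < x (Suc i)) \<Longrightarrow> 0 \<le> x 0 \<Longrightarrow>
        (CLINT \<omega>|M. iexp (u * (I \<omega> + (\<Sum>k<n. \<gamma> k * (B (x (Suc k)) \<omega> - B (x k) \<omega>)))))
        = (CLINT \<omega>|M. iexp (u * I \<omega>)) * (CLINT \<omega>|M. iexp (u * (\<Sum>k<n. \<gamma> k * (B (x (Suc k)) \<omega> - B (x k) \<omega>))))"
  shows "char (distr M borel Z) u = char (distr M borel I) u *
           gchar 0 (\<Sum>s\<in>F. \<Sum>t\<in>F. c s * c t * integral {0..min s t} (\<lambda>w. kern \<alpha> q s w * kern \<alpha> q t w)) u"
proof -
  interpret prob_space M using B by (simp add: brownian_motion_def)
  have Bm[measurable]: "\<And>t. B t \<in> borel_measurable M" using B by (simp add: brownian_motion_def)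
  note [measurable] = Imeas Zmeas
  define V where "V = (\<Sum>s\<in>F. \<Sum>t\<in>F. c s * c t * integral {0..min s t} (\<lambda>w. kern \<alpha> q s w * kern \<alpha> q t w))"
  define T where "T = Max (insert 0 F)"
  have FT: "F \<subseteq> {0..T}" using F by (auto simp: T_def)
  have T0: "T \<ge> 0" using F by (simp add: T_def)
  have "\<forall>m. \<exists>p. fst p 0 = 0 \<and> fst p (snd p) = T \<and> (\<forall>i<snd p. fst p i < fst p (Suc i))
          \<and> (\<forall>i<snd p. fst p (Suc i) - fst p i \<le> 1 / (real m + 1)) \<and> (\<forall>t\<in>F. \<exists>k\<le>snd p. fst p k = t)"
  proof
    fix m :: nat
    have "(1::real) / (real m + 1) > 0" by simp
    from grid_exists[OF F(1) FT T0 this] obtain n x where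
      "x 0 = 0 \<and> x n = T \<and> (\<forall>i<n. x i < x (Suc i)) \<and> (\<forall>i<n. x (Suc i) - x i \<le> 1 / (real m + 1))
       \<and> (\<forall>t\<in>F. \<exists>k\<le>n. x k = t)" by blast
    thus "\<exists>p. fst p 0 = 0 \<and> fst p (snd p) = T \<and> (\<forall>i<snd p. fst p i < fst p (Suc i))
          \<and> (\<forall>i<snd p. fst p (Suc i) - fst p i \<le> 1 / (real m + 1)) \<and> (\<forall>t\<in>F. \<exists>k\<le>snd p. fst p k = t)"
      by (intro exI[of _ "(x, n)"]) simp
  qed
  then obtain P where P: "\<And>m. fst (P m) 0 = 0 \<and> fst (P m) (snd (P m)) = T \<and> (\<forall>i<snd (P m). fst (P m) i < fst (P m) (Suc i))
          \<and> (\<forall>i<snd (P m). fst (P m) (Suc i) - fst (P m) i \<le> 1 / (real m + 1)) \<and> (\<forall>t\<in>F. \<exists>k\<le>snd (P m). fst (P m) k = t)"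
    by metis
  define xx where "xx m = fst (P m)" for m
  define nn where "nn m = snd (P m)" for m
  have grid: "\<And>m. xx m 0 = 0 \<and> (\<forall>i<nn m. xx m i < xx m (Suc i)) \<and> (\<forall>i<nn m. xx m (Suc i) - xx m i \<le> 1 / (real m + 1))"
    using P by (simp add: xx_def nn_def)
  have strict: "\<And>m. \<forall>i<nn m. xx m i < xx m (Suc i)" using grid by blast
  have x0: "\<And>m. xx m 0 = 0" using grid by blast
  define idx where "idx m t = (SOME k. k \<le> nn m \<and> xx m k = t)" for m t
  have idx: "idx m t \<le> nn m \<and> xx m (idx m t) = t" if "t \<in> F" for m t
  proof -
    have "\<exists>k. k \<le> nn m \<and> xx m k = t" using P[of m] that by (auto simp: xx_def nn_def)
    thus ?thesis unfolding idx_def by (rule someI_ex)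
  qed
  let ?K = "kern \<alpha> q"
  define \<gamma> where "\<gamma> m k = (\<Sum>t\<in>F. c t * (if k < idx m t then ?K t (xx m k) else 0))" for m k
  define S where "S m \<omega> = (\<Sum>k<nn m. \<gamma> m k * (B (xx m (Suc k)) \<omega> - B (xx m k) \<omega>))" for m \<omega>
  define v where "v m = (\<Sum>k<nn m. (\<gamma> m k)\<^sup>2 * (xx m (Suc k) - xx m k))" for m
  have Sm[measurable]: "\<And>m. S m \<in> borel_measurable M" unfolding S_def by measurable

  have A: "char (distr M borel (\<lambda>\<omega>. I \<omega> + S m \<omega>)) u = char (distr M borel I) u * gchar 0 (v m) u" for m
  proof -
    have "char (distr M borel (\<lambda>\<omega>. I \<omega> + S m \<omega>)) u = (CLINT \<omega>|M. iexp (u * (I \<omega> + S m \<omega>)))"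
      by (rule char_distr) measurable
    also have "\<dots> = (CLINT \<omega>|M. iexp (u * I \<omega>)) * (CLINT \<omega>|M. iexp (u * S m \<omega>))"
      unfolding S_def by (rule ind[OF strict]) (simp add: x0)
    also have "(CLINT \<omega>|M. iexp (u * S m \<omega>)) = char (distr M borel (S m)) u"
      by (rule char_distr[symmetric]) measurable
    also have "\<dots> = gchar 0 (v m) u"
      unfolding S_def v_def by (rule bm_incr_char[OF B strict]) (simp add: x0)
    also have "(CLINT \<omega>|M. iexp (u * I \<omega>)) = char (distr M borel I) u"
      by (rule char_distr[symmetric]) measurable
    finally show ?thesis .
  qed

  have idxmin: "xx m (min (idx m s) (idx m t)) = min s t \<and> min (idx m s) (idx m t) \<le> nn m"
    if st: "s \<in> F" "t \<in> F" for m s t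
  proof (cases "idx m s \<le> idx m t")
    case True
    have "xx m (idx m s) \<le> xx m (idx m t)"
      using grid_mono[of "nn m" "xx m" "idx m s" "idx m t"] strict[of m] True idx[OF st(2)] by simp
    thus ?thesis using True idx[OF st(1)] idx[OF st(2)] by simp
  next
    case False
    have "xx m (idx m t) \<le> xx m (idx m s)" using grid_mono[of "nn m" "xx m" "idx m t" "idx m s"] strict[of m] False idx[OF st(1)] by simp
    thus ?thesis using False idx[OF st(1)] idx[OF st(2)] by simp
  qed
  have vform: "v m = (\<Sum>s\<in>F. \<Sum>t\<in>F. c s * c t * (\<Sum>k<min (idx m s) (idx m t).
        integral {xx m k..xx m (Suc k)} (\<lambda>_. 1) * (?K s (xx m k) * ?K t (xx m k))))" for m
  proof -
    define f where "f s t k = c s * c t * (if k < min (idx m s) (idx m t) then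
          integral {xx m k..xx m (Suc k)} (\<lambda>_. 1) * (?K s (xx m k) * ?K t (xx m k)) else 0)" for s t k
    have "v m = (\<Sum>k<nn m. \<Sum>s\<in>F. \<Sum>t\<in>F. f s t k)"
      unfolding v_def
    proof (rule sum.cong[OF refl])
      fix k assume k: "k \<in> {..<nn m}"
      have len: "integral {xx m k..xx m (Suc k)} (\<lambda>_. 1::real) = xx m (Suc k) - xx m k"
        using strict[of m] k by (simp add: less_imp_le)
      have "(\<gamma> m k)\<^sup>2 = (\<Sum>s\<in>F. \<Sum>t\<in>F. (c s * (if k < idx m s then ?K s (xx m k) else 0)) * (c t * (if k < idx m t then ?K t (xx m k) else 0)))"
        unfolding \<gamma>_def power2_eq_square by (rule sum_product)
      also have "\<dots> * (xx m (Suc k) - xx m k) = (\<Sum>s\<in>F. \<Sum>t\<in>F. f s t k)"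
        unfolding sum_distrib_right f_def len
        by (intro sum.cong refl) (simp add: algebra_simps)
      finally show "(\<gamma> m k)\<^sup>2 * (xx m (Suc k) - xx m k) = (\<Sum>s\<in>F. \<Sum>t\<in>F. f s t k)" .
    qed
    also have "\<dots> = (\<Sum>s\<in>F. \<Sum>k<nn m. \<Sum>t\<in>F. f s t k)" by (rule sum.swap)
    also have "\<dots> = (\<Sum>s\<in>F. \<Sum>t\<in>F. \<Sum>k<nn m. f s t k)" by (intro sum.cong refl sum.swap)
    also have "\<dots> = (\<Sum>s\<in>F. \<Sum>t\<in>F. c s * c t * (\<Sum>k<min (idx m s) (idx m t).
        integral {xx m k..xx m (Suc k)} (\<lambda>_. 1) * (?K s (xx m k) * ?K t (xx m k))))"
    proof (intro sum.cong refl)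
      fix s t assume st: "s \<in> F" "t \<in> F"
      have "(\<Sum>k<nn m. f s t k) = c s * c t * (\<Sum>k<nn m. (if k < min (idx m s) (idx m t) then
          integral {xx m k..xx m (Suc k)} (\<lambda>_. 1) * (?K s (xx m k) * ?K t (xx m k)) else 0))"
        unfolding f_def by (simp add: sum_distrib_left)
      also have "\<dots> = c s * c t * (\<Sum>k<min (idx m s) (idx m t).
        integral {xx m k..xx m (Suc k)} (\<lambda>_. 1) * (?K s (xx m k) * ?K t (xx m k)))"
        by (rule arg_cong[where f="\<lambda>x. c s * c t * x"], rule sum_if_less[OF conjunct2[OF idxmin[OF st]]])
      finally show "(\<Sum>k<nn m. f s t k) = c s * c t * (\<Sum>k<min (idx m s) (idx m t).
        integral {xx m k..xx m (Suc k)} (\<lambda>_. 1) * (?K s (xx m k) * ?K t (xx m k)))" .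
    qed
    finally show ?thesis .
  qed
  have vlim: "v \<longlonglongrightarrow> V"
    unfolding vform V_def
  proof (intro tendsto_sum tendsto_mult_left)
    fix s t assume st: "s \<in> F" "t \<in> F"
    have cs: "continuous_on {0..min s t} (?K s)"
      by (rule continuous_on_subset[OF kern_cont[of s q, OF q[OF st(1)]]]) auto
    have ct: "continuous_on {0..min s t} (?K t)"
      by (rule continuous_on_subset[OF kern_cont[of t q, OF q[OF st(2)]]]) auto
    have "(\<lambda>m. \<Sum>k<min (idx m s) (idx m t). integral {xx m k..xx m (Suc k)} (\<lambda>_. 1) * (\<lambda>w. ?K s w * ?K t w) (xx m k))
        \<longlonglongrightarrow> integral {0..min s t} (\<lambda>w. 1 * (\<lambda>w. ?K s w * ?K t w) w)"
    proof (rule grid_limit[OF grid])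
      show "\<And>m. min (idx m s) (idx m t) \<le> nn m \<and> xx m (min (idx m s) (idx m t)) = min s t"
        using idxmin[OF st] by simp
      show "continuous_on {0..min s t} (\<lambda>_. 1::real)" by simp
      show "continuous_on {0..min s t} (\<lambda>w. ?K s w * ?K t w)" using cs ct by (intro continuous_intros)
      show "\<And>m k. k < min (idx m s) (idx m t) \<Longrightarrow> xx m k \<le> xx m k \<and> xx m k \<le> xx m (Suc k)"
      proof -
        fix m k assume "k < min (idx m s) (idx m t)"
        hence "k < nn m" using idxmin[OF st, of m] by linarith
        thus "xx m k \<le> xx m k \<and> xx m k \<le> xx m (Suc k)" using strict[of m] by (simp add: less_imp_le)
      qed
    qed
    thus "(\<lambda>m. \<Sum>k<min (idx m s) (idx m t). integral {xx m k..xx m (Suc k)} (\<lambda>_. 1) * (?K s (xx m k) * ?K t (xx m k)))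
        \<longlonglongrightarrow> integral {0..min s t} (\<lambda>w. ?K s w * ?K t w)" by simp
  qed

  have C: "(\<lambda>m. S m \<omega>) \<longlonglongrightarrow> (\<Sum>t\<in>F. c t * (\<alpha> * B t \<omega> + integral {0..t} (\<lambda>w. q t w * B w \<omega>)))"
    if B0: "B 0 \<omega> = 0" and Bc: "continuous_on {0..} (\<lambda>t. B t \<omega>)" for \<omega>
  proof -
    have Sform: "S m \<omega> = (\<Sum>t\<in>F. c t * (\<Sum>k<idx m t. ?K t (xx m k) * (B (xx m (Suc k)) \<omega> - B (xx m k) \<omega>)))" for m
    proof -
      have "S m \<omega> = (\<Sum>k<nn m. \<Sum>t\<in>F. c t * (if k < idx m t then ?K t (xx m k) * (B (xx m (Suc k)) \<omega> - B (xx m k) \<omega>) else 0))"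
        unfolding S_def \<gamma>_def sum_distrib_right by (intro sum.cong refl) auto
      also have "\<dots> = (\<Sum>t\<in>F. \<Sum>k<nn m. c t * (if k < idx m t then ?K t (xx m k) * (B (xx m (Suc k)) \<omega> - B (xx m k) \<omega>) else 0))"
        by (rule sum.swap)
      also have "\<dots> = (\<Sum>t\<in>F. c t * (\<Sum>k<idx m t. ?K t (xx m k) * (B (xx m (Suc k)) \<omega> - B (xx m k) \<omega>)))"
      proof (intro sum.cong refl)
        fix t assume t: "t \<in> F"
        show "(\<Sum>k<nn m. c t * (if k < idx m t then ?K t (xx m k) * (B (xx m (Suc k)) \<omega> - B (xx m k) \<omega>) else 0))
            = c t * (\<Sum>k<idx m t. ?K t (xx m k) * (B (xx m (Suc k)) \<omega> - B (xx m k) \<omega>))"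
          unfolding sum_distrib_left[symmetric]
          by (rule arg_cong[where f="\<lambda>x. c t * x"], rule sum_if_less) (use idx[OF t] in auto)
      qed
      finally show ?thesis .
    qed
    have SBP: "(\<Sum>k<idx m t. ?K t (xx m k) * (B (xx m (Suc k)) \<omega> - B (xx m k) \<omega>))
        = \<alpha> * B t \<omega> + (\<Sum>i<idx m t. integral {xx m i..xx m (Suc i)} (q t) * B (xx m (Suc i)) \<omega>)"
      if t: "t \<in> F" for m t
    proof -
      let ?j = "idx m t"
      have j: "?j \<le> nn m" "xx m ?j = t" using idx[OF t] by auto
      have Kk: "?K t (xx m k) = \<alpha> + (\<Sum>i\<in>{k..<?j}. integral {xx m i..xx m (Suc i)} (q t))" if k: "k < ?j" for k
      proof -
        have "xx m 0 \<le> xx m k" using grid_mono[of "nn m" "xx m" 0 k] strict[of m] k j by simp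
        hence "{xx m k..xx m ?j} \<subseteq> {0..t}" using x0[of m] j by auto
        hence cq: "continuous_on {xx m k..xx m ?j} (q t)" using continuous_on_subset[OF q[OF t]] by blast
        have "integral {xx m k..xx m ?j} (q t) = (\<Sum>i\<in>{k..<?j}. integral {xx m i..xx m (Suc i)} (q t))"
          by (rule integral_grid_split[OF strict[of m] _ j(1) cq]) (use k in simp)
        thus ?thesis unfolding kern_def using j by simp
      qed
      have "(\<Sum>k<?j. ?K t (xx m k) * (B (xx m (Suc k)) \<omega> - B (xx m k) \<omega>))
          = (\<Sum>k<?j. (\<alpha> + (\<Sum>i\<in>{k..<?j}. integral {xx m i..xx m (Suc i)} (q t))) * (B (xx m (Suc k)) \<omega> - B (xx m k) \<omega>))"
        by (intro sum.cong refl) (simp add: Kk)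
      also have "\<dots> = \<alpha> * (B (xx m ?j) \<omega> - B (xx m 0) \<omega>) + (\<Sum>i<?j. integral {xx m i..xx m (Suc i)} (q t) * (B (xx m (Suc i)) \<omega> - B (xx m 0) \<omega>))"
        by (rule sum_by_parts_grid[where a="\<lambda>k. B (xx m k) \<omega>"])
      also have "\<dots> = \<alpha> * B t \<omega> + (\<Sum>i<?j. integral {xx m i..xx m (Suc i)} (q t) * B (xx m (Suc i)) \<omega>)"
        using j x0[of m] B0 by simp
      finally show ?thesis .
    qed
    have lim1: "(\<lambda>m. \<Sum>i<idx m t. integral {xx m i..xx m (Suc i)} (q t) * B (xx m (Suc i)) \<omega>)
        \<longlonglongrightarrow> integral {0..t} (\<lambda>w. q t w * B w \<omega>)" if t: "t \<in> F" for t
    proof (rule grid_limit[OF grid, where g="\<lambda>w. B w \<omega>"])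
      show "\<And>m. idx m t \<le> nn m \<and> xx m (idx m t) = t" using idx[OF t] by simp
      show "continuous_on {0..t} (q t)" by (rule q[OF t])
      show "continuous_on {0..t} (\<lambda>w. B w \<omega>)" by (rule continuous_on_subset[OF Bc]) auto
      fix m k assume "k < idx m t"
      hence "k < nn m" using idx[OF t, of m] by linarith
      thus "xx m k \<le> xx m (Suc k) \<and> xx m (Suc k) \<le> xx m (Suc k)" using strict[of m] by (simp add: less_imp_le)
    qed
    show ?thesis
      unfolding Sform
      by (intro tendsto_sum tendsto_mult_left) (auto simp: SBP intro!: tendsto_add lim1)
  qed

  have AEc: "AE \<omega> in M. (\<lambda>m. I \<omega> + S m \<omega>) \<longlonglongrightarrow> Z \<omega>"
  proof -
    have "AE \<omega> in M. B 0 \<omega> = 0" "AE \<omega> in M. continuous_on {0..} (\<lambda>t. B t \<omega>)"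
      using B by (auto simp: brownian_motion_def)
    thus ?thesis using Zeq
      by eventually_elim (auto intro!: tendsto_add C)
  qed
  have lim2: "(\<lambda>m. char (distr M borel (\<lambda>\<omega>. I \<omega> + S m \<omega>)) u) \<longlonglongrightarrow> char (distr M borel Z) u"
  proof -
    have "(\<lambda>m. CLINT \<omega>|M. iexp (u * (I \<omega> + S m \<omega>))) \<longlonglongrightarrow> (CLINT \<omega>|M. iexp (u * Z \<omega>))"
    proof (rule integral_dominated_convergence[where w="\<lambda>_. 1"])
      show "(\<lambda>\<omega>. iexp (u * Z \<omega>)) \<in> borel_measurable M" by measurable
      show "\<And>m. (\<lambda>\<omega>. iexp (u * (I \<omega> + S m \<omega>))) \<in> borel_measurable M" by measurable
      show "integrable M (\<lambda>_. 1::real)" by simp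
      show "AE \<omega> in M. (\<lambda>m. iexp (u * (I \<omega> + S m \<omega>))) \<longlonglongrightarrow> iexp (u * Z \<omega>)"
        using AEc
      proof eventually_elim
        case (elim \<omega>)
        have "isCont (\<lambda>x. iexp (u * x)) (Z \<omega>)" by (intro continuous_intros)
        from isCont_tendsto_compose[OF this elim] show ?case by simp
      qed
      show "\<And>m. AE \<omega> in M. norm (iexp (u * (I \<omega> + S m \<omega>))) \<le> 1"
        by (simp add: norm_exp_i_times)
    qed
    thus ?thesis by (simp add: char_distr)
  qed
  have lim3: "(\<lambda>m. char (distr M borel (\<lambda>\<omega>. I \<omega> + S m \<omega>)) u) \<longlonglongrightarrow> char (distr M borel I) u * gchar 0 V u"
    unfolding A gchar_def using vlim by (auto intro!: tendsto_intros)
  show ?thesis using LIMSEQ_unique[OF lim2 lim3] by (simp add: V_def)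
qed

lemma integral_deriv_within:
  fixes h :: "real \<Rightarrow> real"
  assumes "continuous_on {a..b} h" "u \<in> {a..b}"
  shows "((\<lambda>u. integral {a..u} h) has_real_derivative h u) (at u within {a..b})"
  using integral_has_vector_derivative[OF assms]
  by (simp add: has_real_derivative_iff_has_vector_derivative)

lemma ode_unique:
  fixes z g :: "real \<Rightarrow> real"
  assumes T: "T \<ge> 0" and zc: "continuous_on {0..T} z" and gc: "continuous_on {0..T} g"
    and eq: "\<And>u. u \<in> {0..T} \<Longrightarrow> z u = z 0 + integral {0..u} (\<lambda>s. - z s + g s)"
  shows "z T = exp (- T) * z 0 + integral {0..T} (\<lambda>s. exp (s - T) * g s)"
proof -
  define h where "h s = - z s + g s" for s
  have hc: "continuous_on {0..T} h" unfolding h_def using zc gc by (intro continuous_intros)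
  have egc: "continuous_on {0..T} (\<lambda>s. exp s * g s)" using gc by (intro continuous_intros)
  define y where "y u = exp u * (z 0 + integral {0..u} h) - integral {0..u} (\<lambda>s. exp s * g s)" for u
  have d: "(y has_real_derivative 0) (at u within {0..T})" if u: "u \<in> {0..T}" for u
  proof -
    have e: "(exp has_real_derivative exp u) (at u within {0..T})"
      by (rule has_field_derivative_at_within[OF DERIV_exp])
    have d1: "((\<lambda>u. z 0 + integral {0..u} h) has_real_derivative h u) (at u within {0..T})"
      using DERIV_add[OF DERIV_const integral_deriv_within[OF hc u]] by simp
    have "((\<lambda>u. exp u * (z 0 + integral {0..u} h) - integral {0..u} (\<lambda>s. exp s * g s)) has_real_derivative
        (exp u * (z 0 + integral {0..u} h) + h u * exp u - exp u * g u)) (at u within {0..T})"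
      using DERIV_diff[OF DERIV_mult[OF e d1] integral_deriv_within[OF egc u]] by (simp add: mult_ac)
    hence "(y has_real_derivative (exp u * (z 0 + integral {0..u} h) + exp u * h u - exp u * g u)) (at u within {0..T})"
      unfolding y_def by (simp add: mult_ac)
    moreover have "exp u * (z 0 + integral {0..u} h) + exp u * h u - exp u * g u = 0"
      using eq[OF u] unfolding h_def by (simp add: algebra_simps)
    ultimately show ?thesis by simp
  qed
  obtain C where C: "\<And>u. u \<in> {0..T} \<Longrightarrow> y u = C"
    using has_field_derivative_zero_constant[of "{0..T}" y] d by (auto simp: convex_real_interval)
  have "y T = y 0" using C T by simp
  hence "exp T * (z 0 + integral {0..T} h) - integral {0..T} (\<lambda>s. exp s * g s) = z 0"
    by (simp add: y_def)
  hence "z 0 + integral {0..T} h = exp (- T) * (z 0 + integral {0..T} (\<lambda>s. exp s * g s))"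
    by (simp add: exp_minus field_simps)
  also have "\<dots> = exp (- T) * z 0 + integral {0..T} (\<lambda>s. exp (- T) * (exp s * g s))"
    using integral_mult[OF integrable_continuous_interval[OF egc], of "exp (- T)"] by (simp only: distrib_left)
  also have "integral {0..T} (\<lambda>s. exp (- T) * (exp s * g s)) = integral {0..T} (\<lambda>s. exp (s - T) * g s)"
    by (intro integral_cong) (simp add: exp_diff exp_minus field_simps)
  finally show ?thesis using eq[of T] T by (simp add: h_def)
qed

lemma ibp_exp:
  fixes \<phi> :: "real \<Rightarrow> real"
  assumes t: "t \<ge> 0" and pc: "continuous_on {0..t} \<phi>"
  shows "integral {0..t} (\<lambda>s. exp (s - t) * integral {0..s} \<phi>) = integral {0..t} (\<lambda>s. (1 - exp (s - t)) * \<phi> s)"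
proof -
  have epc: "continuous_on {0..t} (\<lambda>s. exp (s - t) * \<phi> s)" using pc by (intro continuous_intros)
  define P where "P u = exp (u - t) * integral {0..u} \<phi> - integral {0..u} (\<lambda>s. exp (s - t) * \<phi> s)" for u
  have "((\<lambda>s. exp (s - t) * integral {0..s} \<phi>) has_integral (P t - P 0)) {0..t}"
  proof (rule fundamental_theorem_of_calculus[OF t])
    fix u assume u: "u \<in> {0..t}"
    have e: "((\<lambda>u. exp (u - t)) has_real_derivative exp (u - t)) (at u within {0..t})"
      using has_field_derivative_at_within[OF DERIV_chain2[OF DERIV_exp DERIV_diff[OF DERIV_ident DERIV_const]]]
      by simp
    have "(P has_real_derivative (exp (u - t) * integral {0..u} \<phi> + \<phi> u * exp (u - t) - exp (u - t) * \<phi> u)) (at u within {0..t})"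
      unfolding P_def
      using DERIV_diff[OF DERIV_mult[OF e integral_deriv_within[OF pc u]] integral_deriv_within[OF epc u]] by simp
    hence "(P has_real_derivative (exp (u - t) * integral {0..u} \<phi>)) (at u within {0..t})" by simp
    thus "(P has_vector_derivative exp (u - t) * integral {0..u} \<phi>) (at u within {0..t})"
      by (simp add: has_real_derivative_iff_has_vector_derivative)
  qed
  hence "integral {0..t} (\<lambda>s. exp (s - t) * integral {0..s} \<phi>) = P t - P 0" by (rule integral_unique)
  also have "\<dots> = integral {0..t} \<phi> - integral {0..t} (\<lambda>s. exp (s - t) * \<phi> s)"
    by (simp add: P_def)
  also have "\<dots> = integral {0..t} (\<lambda>s. (1 - exp (s - t)) * \<phi> s)"
    using integrable_continuous_interval[OF pc] integrable_continuous_interval[OF epc]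
    by (simp add: integral_diff[symmetric] algebra_simps)
  finally show ?thesis .
qed

lemma integral_exp_shift:
  fixes t :: real
  assumes t: "t \<ge> 0"
  shows "integral {0..t} (\<lambda>s. exp (s - t)) = 1 - exp (- t)"
proof -
  have "((\<lambda>s. exp (s - t)) has_integral (exp (t - t) - exp (0 - t))) {0..t}"
  proof (rule fundamental_theorem_of_calculus[OF t])
    fix u assume "u \<in> {0..t}"
    have "((\<lambda>s. exp (s - t)) has_real_derivative exp (u - t)) (at u within {0..t})"
      using has_field_derivative_at_within[OF DERIV_chain2[OF DERIV_exp DERIV_diff[OF DERIV_ident DERIV_const]]]
      by simp
    thus "((\<lambda>s. exp (s - t)) has_vector_derivative exp (u - t)) (at u within {0..t})"
      by (simp add: has_real_derivative_iff_has_vector_derivative)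
  qed
  thus ?thesis by (simp add: integral_unique)
qed

lemma integral_lin3:
  fixes f1 f2 f3 :: "real \<Rightarrow> real"
  assumes "continuous_on {a..b} f1" "continuous_on {a..b} f2" "continuous_on {a..b} f3"
  shows "integral {a..b} (\<lambda>s. c1 * f1 s + f2 s - c3 * f3 s) = c1 * integral {a..b} f1 + integral {a..b} f2 - c3 * integral {a..b} f3"
proof -
  have i1: "f1 integrable_on {a..b}" "f2 integrable_on {a..b}" "f3 integrable_on {a..b}"
    using assms by (auto intro: integrable_continuous_interval)
  have i1': "(\<lambda>s. c1 * f1 s) integrable_on {a..b}" "(\<lambda>s. c3 * f3 s) integrable_on {a..b}"
    using integrable_on_cmult_left[OF i1(1), of c1] integrable_on_cmult_left[OF i1(3), of c3] by simp_all
  have "integral {a..b} (\<lambda>s. c1 * f1 s + f2 s - c3 * f3 s) = integral {a..b} (\<lambda>s. c1 * f1 s + f2 s) - integral {a..b} (\<lambda>s. c3 * f3 s)"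
    by (rule integral_diff) (use i1 i1' in \<open>auto intro: integrable_add\<close>)
  also have "integral {a..b} (\<lambda>s. c1 * f1 s + f2 s) = integral {a..b} (\<lambda>s. c1 * f1 s) + integral {a..b} f2"
    by (rule integral_add) (use i1 i1' in auto)
  finally show ?thesis by simp
qed

lemma X_repr:
  fixes X B :: "real \<Rightarrow> 'a \<Rightarrow> real" and G :: "'a \<Rightarrow> real"
  assumes Xc: "continuous_on {0..} (\<lambda>t. X t \<omega>)" and Bc: "continuous_on {0..} (\<lambda>t. B t \<omega>)"
    and B0: "B 0 \<omega> = 0"
    and eq: "\<forall>t\<ge>0. X t \<omega> = X 0 \<omega> + integral {0..t} (\<lambda>s. - X s \<omega> + G \<omega>) + lam * (B t \<omega> - B 0 \<omega>)"
    and t: "t \<ge> 0"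
  shows "X t \<omega> = exp (- t) * X 0 \<omega> + (1 - exp (- t)) * G \<omega>
           + (lam * B t \<omega> + integral {0..t} (\<lambda>w. (- lam * exp (w - t)) * B w \<omega>))"
proof -
  define z where "z s = X s \<omega> - lam * B s \<omega>" for s
  define g where "g s = G \<omega> - lam * B s \<omega>" for s
  have Bc': "continuous_on {0..t} (\<lambda>s. B s \<omega>)" by (rule continuous_on_subset[OF Bc]) auto
  have Xc': "continuous_on {0..t} (\<lambda>s. X s \<omega>)" by (rule continuous_on_subset[OF Xc]) auto
  have zc: "continuous_on {0..t} z" unfolding z_def using Xc' Bc' by (intro continuous_intros)
  have gc: "continuous_on {0..t} g" unfolding g_def using Bc' by (intro continuous_intros)
  have zeq: "z u = z 0 + integral {0..u} (\<lambda>s. - z s + g s)" if u: "u \<in> {0..t}" for u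
  proof -
    have "(\<lambda>s. - z s + g s) = (\<lambda>s. - X s \<omega> + G \<omega>)" by (auto simp: z_def g_def)
    moreover have "X u \<omega> = X 0 \<omega> + integral {0..u} (\<lambda>s. - X s \<omega> + G \<omega>) + lam * (B u \<omega> - B 0 \<omega>)"
      by (rule eq[rule_format]) (use u in simp)
    ultimately show ?thesis using B0 unfolding z_def by simp
  qed
  have "z t = exp (- t) * z 0 + integral {0..t} (\<lambda>s. exp (s - t) * g s)"
    by (rule ode_unique[OF t zc gc zeq])
  also have "integral {0..t} (\<lambda>s. exp (s - t) * g s)
      = integral {0..t} (\<lambda>s. G \<omega> * exp (s - t) + (- lam * exp (s - t)) * B s \<omega> - 0 * 0)"
    by (intro integral_cong) (simp add: g_def algebra_simps)
  also have "\<dots> = G \<omega> * integral {0..t} (\<lambda>s. exp (s - t)) + integral {0..t} (\<lambda>w. (- lam * exp (w - t)) * B w \<omega>) - 0 * integral {0..t} (\<lambda>_. 0)"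
    by (rule integral_lin3) (use Bc' in \<open>auto intro!: continuous_intros\<close>)
  finally show ?thesis using integral_exp_shift[OF t] B0 by (simp add: z_def algebra_simps)
qed

definition fY :: "real \<Rightarrow> real \<Rightarrow> real \<Rightarrow> real" where
  "fY lam sg r = 1 / (lam\<^sup>2 + sg\<^sup>2 * r)"
definition fY' :: "real \<Rightarrow> real \<Rightarrow> real \<Rightarrow> real" where
  "fY' lam sg r = - sg\<^sup>2 / (lam\<^sup>2 + sg\<^sup>2 * r)\<^sup>2"
definition qY :: "real \<Rightarrow> real \<Rightarrow> real \<Rightarrow> real \<Rightarrow> real" where
  "qY lam sg t w = exp (w - t) * (lam * sg\<^sup>2 * fY lam sg w - lam)
      - lam * sg\<^sup>2 * ((1 - exp (w - t)) * fY' lam sg w)"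

lemma denom_pos: "lam \<noteq> 0 \<Longrightarrow> r \<ge> 0 \<Longrightarrow> lam\<^sup>2 + sg\<^sup>2 * (r::real) > 0"
  by (simp add: add_pos_nonneg)

lemma fY_deriv:
  assumes "lam \<noteq> 0" "r \<ge> 0"
  shows "((\<lambda>r. 1 / (lam\<^sup>2 + sg\<^sup>2 * r)) has_real_derivative fY' lam sg r) (at r)"
proof -
  have p: "lam\<^sup>2 + sg\<^sup>2 * r \<noteq> 0" using denom_pos[OF assms, of sg] by simp
  have d: "((\<lambda>r. lam\<^sup>2 + sg\<^sup>2 * r) has_real_derivative sg\<^sup>2) (at r)"
    using DERIV_add[OF DERIV_const DERIV_cmult[OF DERIV_ident, of "sg\<^sup>2" r]] by simp
  have "((\<lambda>r. 1 / (lam\<^sup>2 + sg\<^sup>2 * r)) has_real_derivative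
      (0 * (lam\<^sup>2 + sg\<^sup>2 * r) - 1 * sg\<^sup>2) / ((lam\<^sup>2 + sg\<^sup>2 * r) * (lam\<^sup>2 + sg\<^sup>2 * r))) (at r)"
    by (rule DERIV_divide[OF DERIV_const d p])
  thus ?thesis by (simp add: fY'_def power2_eq_square)
qed

lemma deriv_fY: "lam \<noteq> 0 \<Longrightarrow> r \<ge> 0 \<Longrightarrow> deriv (\<lambda>r. 1 / (lam\<^sup>2 + sg\<^sup>2 * r)) r = fY' lam sg r"
  by (rule DERIV_imp_deriv[OF fY_deriv])

lemma fY_cont: "lam \<noteq> 0 \<Longrightarrow> continuous_on {0..t} (fY lam sg)"
  unfolding fY_def by (intro continuous_intros) (auto dest: denom_pos[of lam _ sg])

lemma fY'_cont: "lam \<noteq> 0 \<Longrightarrow> continuous_on {0..t} (fY' lam sg)"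
  unfolding fY'_def by (intro continuous_intros) (auto dest: denom_pos[of lam _ sg])

lemma Y_repr:
  fixes Y W :: "real \<Rightarrow> 'a \<Rightarrow> real" and J lam sigma t :: real
  assumes lam: "lam \<noteq> 0"
    and Yc: "continuous_on {0..} (\<lambda>t. Y t \<omega>)" and Wc: "continuous_on {0..} (\<lambda>t. W t \<omega>)"
    and W0: "W 0 \<omega> = 0"
    and eq: "\<forall>t\<ge>0. Y t \<omega> = Y 0 \<omega> + integral {0..t} (\<lambda>s. - Y s \<omega> + J
                     + lam * sigma\<^sup>2 * wiener_integral (\<lambda>r. 1 / (lam\<^sup>2 + sigma\<^sup>2 * r)) W s \<omega>)
                   + lam * (W t \<omega> - W 0 \<omega>)"
    and t: "t \<ge> 0"
  shows "Y t \<omega> = exp (- t) * Y 0 \<omega> + (1 - exp (- t)) * J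
           + (lam * W t \<omega> + integral {0..t} (\<lambda>w. qY lam sigma t w * W w \<omega>))"
proof -
  let ?f = "fY lam sigma" and ?f' = "fY' lam sigma"
  define \<Phi> where "\<Phi> s = integral {0..s} (\<lambda>r. ?f' r * W r \<omega>)" for s
  have Wc': "continuous_on {0..t} (\<lambda>s. W s \<omega>)" by (rule continuous_on_subset[OF Wc]) auto
  have Yc': "continuous_on {0..t} (\<lambda>s. Y s \<omega>)" by (rule continuous_on_subset[OF Yc]) auto
  have fc: "continuous_on {0..t} ?f" by (rule fY_cont[OF lam])
  have f'c: "continuous_on {0..t} ?f'" by (rule fY'_cont[OF lam])
  have f'Wc: "continuous_on {0..t} (\<lambda>r. ?f' r * W r \<omega>)" using f'c Wc' by (intro continuous_intros)
  have \<Phi>c: "continuous_on {0..t} \<Phi>"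
    unfolding \<Phi>_def by (rule indefinite_integral_continuous_1[OF integrable_continuous_interval[OF f'Wc]])
  have wi: "wiener_integral (\<lambda>r. 1 / (lam\<^sup>2 + sigma\<^sup>2 * r)) W s \<omega> = ?f s * W s \<omega> - \<Phi> s" if s: "s \<ge> 0" for s
  proof -
    have "integral {0..s} (\<lambda>r. deriv (\<lambda>r. 1 / (lam\<^sup>2 + sigma\<^sup>2 * r)) r * W r \<omega>) = \<Phi> s"
      unfolding \<Phi>_def by (intro integral_cong) (simp add: deriv_fY[OF lam])
    thus ?thesis unfolding wiener_integral_def using W0 by (simp add: fY_def)
  qed
  define z where "z s = Y s \<omega> - lam * W s \<omega>" for s
  define g where "g s = J + lam * sigma\<^sup>2 * (?f s * W s \<omega> - \<Phi> s) - lam * W s \<omega>" for s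
  have zc: "continuous_on {0..t} z" unfolding z_def using Yc' Wc' by (intro continuous_intros)
  have gc: "continuous_on {0..t} g" unfolding g_def using fc Wc' \<Phi>c by (intro continuous_intros)
  have zeq: "z u = z 0 + integral {0..u} (\<lambda>s. - z s + g s)" if u: "u \<in> {0..t}" for u
  proof -
    have "integral {0..u} (\<lambda>s. - z s + g s) = integral {0..u} (\<lambda>s. - Y s \<omega> + J
                     + lam * sigma\<^sup>2 * wiener_integral (\<lambda>r. 1 / (lam\<^sup>2 + sigma\<^sup>2 * r)) W s \<omega>)"
    proof (rule integral_cong)
      fix s assume "s \<in> {0..u}"
      hence "s \<ge> 0" by simp
      from wi[OF this] show "- z s + g s = - Y s \<omega> + J
                     + lam * sigma\<^sup>2 * wiener_integral (\<lambda>r. 1 / (lam\<^sup>2 + sigma\<^sup>2 * r)) W s \<omega>"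
        by (simp only: z_def g_def)
    qed
    moreover have "Y u \<omega> = Y 0 \<omega> + integral {0..u} (\<lambda>s. - Y s \<omega> + J
                     + lam * sigma\<^sup>2 * wiener_integral (\<lambda>r. 1 / (lam\<^sup>2 + sigma\<^sup>2 * r)) W s \<omega>)
                   + lam * (W u \<omega> - W 0 \<omega>)"
      by (rule eq[rule_format]) (use u in simp)
    ultimately show ?thesis using W0 unfolding z_def by simp
  qed
  have "z t = exp (- t) * z 0 + integral {0..t} (\<lambda>s. exp (s - t) * g s)"
    by (rule ode_unique[OF t zc gc zeq])
  also have "integral {0..t} (\<lambda>s. exp (s - t) * g s)
      = integral {0..t} (\<lambda>s. J * exp (s - t) + (exp (s - t) * (lam * sigma\<^sup>2 * ?f s - lam)) * W s \<omega>
            - (lam * sigma\<^sup>2) * (exp (s - t) * \<Phi> s))"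
    by (intro integral_cong) (simp add: g_def algebra_simps)
  also have "\<dots> = J * integral {0..t} (\<lambda>s. exp (s - t)) + integral {0..t} (\<lambda>s. (exp (s - t) * (lam * sigma\<^sup>2 * ?f s - lam)) * W s \<omega>)
            - (lam * sigma\<^sup>2) * integral {0..t} (\<lambda>s. exp (s - t) * \<Phi> s)"
    by (rule integral_lin3) (use Wc' fc \<Phi>c in \<open>auto intro!: continuous_intros\<close>)
  also have "integral {0..t} (\<lambda>s. exp (s - t) * \<Phi> s) = integral {0..t} (\<lambda>s. (1 - exp (s - t)) * (?f' s * W s \<omega>))"
    unfolding \<Phi>_def by (rule ibp_exp[OF t f'Wc])
  also have "integral {0..t} (\<lambda>s. (exp (s - t) * (lam * sigma\<^sup>2 * ?f s - lam)) * W s \<omega>)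
       - (lam * sigma\<^sup>2) * integral {0..t} (\<lambda>s. (1 - exp (s - t)) * (?f' s * W s \<omega>))
       = integral {0..t} (\<lambda>w. qY lam sigma t w * W w \<omega>)"
  proof -
    have "integral {0..t} (\<lambda>w. qY lam sigma t w * W w \<omega>)
       = integral {0..t} (\<lambda>s. 0 * 0 + (exp (s - t) * (lam * sigma\<^sup>2 * ?f s - lam)) * W s \<omega>
             - (lam * sigma\<^sup>2) * ((1 - exp (s - t)) * (?f' s * W s \<omega>)))"
      by (intro integral_cong) (simp add: qY_def algebra_simps)
    also have "\<dots> = 0 * integral {0..t} (\<lambda>_. 0) + integral {0..t} (\<lambda>s. (exp (s - t) * (lam * sigma\<^sup>2 * ?f s - lam)) * W s \<omega>)
             - (lam * sigma\<^sup>2) * integral {0..t} (\<lambda>s. (1 - exp (s - t)) * (?f' s * W s \<omega>))"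
      by (rule integral_lin3) (use Wc' fc f'c in \<open>auto intro!: continuous_intros\<close>)
    finally show ?thesis by simp
  qed
  ultimately show ?thesis
    using integral_exp_shift[OF t] W0 unfolding z_def by (simp add: algebra_simps)
qed

lemma exp_shift_deriv:
  "((\<lambda>w. exp (w - s)) has_real_derivative exp (w - s)) (at w within S)"
  using has_field_derivative_at_within[OF DERIV_chain2[OF DERIV_exp DERIV_diff[OF DERIV_ident DERIV_const]]]
  by simp

lemma kernX:
  fixes lam t w :: real
  assumes "0 \<le> w" "w \<le> t"
  shows "kern lam (\<lambda>t w. - lam * exp (w - t)) t w = lam * exp (w - t)"
proof -
  have "((\<lambda>u. - lam * exp (u - t)) has_integral ((- lam * exp (t - t)) - (- lam * exp (w - t)))) {w..t}"
  proof (rule fundamental_theorem_of_calculus)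
    show "w \<le> t" using assms by simp
    fix u assume "u \<in> {w..t}"
    show "((\<lambda>u. - lam * exp (u - t)) has_vector_derivative - lam * exp (u - t)) (at u within {w..t})"
    proof -
      have e: "((\<lambda>u. exp (u - t)) has_real_derivative exp (u - t)) (at u within {w..t})" by (rule exp_shift_deriv)
      show ?thesis using DERIV_cmult[OF e, of "- lam"]
        by (simp add: has_real_derivative_iff_has_vector_derivative)
    qed
  qed
  hence "integral {w..t} (\<lambda>u. - lam * exp (u - t)) = (- lam * exp (t - t)) - (- lam * exp (w - t))"
    by (rule integral_unique)
  thus ?thesis by (simp add: kern_def)
qed

lemma kernY:
  fixes lam sg t w :: real
  assumes lam: "lam \<noteq> 0" and w: "0 \<le> w" "w \<le> t"
  shows "kern lam (qY lam sg) t w = lam * exp (w - t) + lam * sg\<^sup>2 * fY lam sg w * (1 - exp (w - t))"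
proof -
  define P where "P u = - lam * exp (u - t) - lam * sg\<^sup>2 * ((1 - exp (u - t)) * fY lam sg u)" for u
  have "(qY lam sg t has_integral (P t - P w)) {w..t}"
  proof (rule fundamental_theorem_of_calculus)
    show "w \<le> t" using w by simp
    fix u assume u: "u \<in> {w..t}"
    hence u0: "u \<ge> 0" using w by simp
    have dF: "(fY lam sg has_real_derivative fY' lam sg u) (at u within {w..t})"
      using has_field_derivative_at_within[OF fY_deriv[OF lam u0]] by (simp add: fY_def[abs_def])
    have dD: "((\<lambda>u. 1 - exp (u - t)) has_real_derivative - exp (u - t)) (at u within {w..t})"
      using DERIV_diff[OF DERIV_const exp_shift_deriv[where w=u and s=t and S="{w..t}"], of 1] by simp
    have "(P has_real_derivative (- lam * exp (u - t) - lam * sg\<^sup>2 * (- exp (u - t) * fY lam sg u + fY' lam sg u * (1 - exp (u - t))))) (at u within {w..t})"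
      unfolding P_def
      by (rule DERIV_diff[OF DERIV_cmult[OF exp_shift_deriv] DERIV_cmult[OF DERIV_mult[OF dD dF]]])
    moreover have "- lam * exp (u - t) - lam * sg\<^sup>2 * (- exp (u - t) * fY lam sg u + fY' lam sg u * (1 - exp (u - t)))
        = qY lam sg t u"
      by (simp add: qY_def algebra_simps)
    ultimately show "(P has_vector_derivative qY lam sg t u) (at u within {w..t})"
      by (simp add: has_real_derivative_iff_has_vector_derivative)
  qed
  hence "integral {w..t} (qY lam sg t) = P t - P w" by (rule integral_unique)
  thus ?thesis by (simp add: kern_def P_def algebra_simps)
qed

lemma cov_identity:
  fixes lam sg s t :: real
  assumes lam: "lam \<noteq> 0" and s: "s \<ge> 0" and t: "t \<ge> 0"
  shows "integral {0..min s t} (\<lambda>w. kern lam (qY lam sg) s w * kern lam (qY lam sg) t w)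
       = integral {0..min s t} (\<lambda>w. kern lam (\<lambda>t w. - lam * exp (w - t)) s w * kern lam (\<lambda>t w. - lam * exp (w - t)) t w)
         + sg\<^sup>2 * (1 - exp (- s)) * (1 - exp (- t))"
proof -
  define m where "m = min s t"
  have m0: "m \<ge> 0" using s t by (simp add: m_def)
  define ex where "ex r w = lam * exp (w - r)" for r w
  define ey where "ey r w = ex r w + lam * sg\<^sup>2 * fY lam sg w * (1 - exp (w - r))" for r w
  have eqY: "integral {0..m} (\<lambda>w. kern lam (qY lam sg) s w * kern lam (qY lam sg) t w) = integral {0..m} (\<lambda>w. ey s w * ey t w)"
  proof (rule integral_cong)
    fix w assume "w \<in> {0..m}"
    thus "kern lam (qY lam sg) s w * kern lam (qY lam sg) t w = ey s w * ey t w"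
      using kernY[OF lam, of w s sg] kernY[OF lam, of w t sg] by (simp add: m_def ey_def ex_def)
  qed
  have eqX: "integral {0..m} (\<lambda>w. kern lam (\<lambda>t w. - lam * exp (w - t)) s w * kern lam (\<lambda>t w. - lam * exp (w - t)) t w)
      = integral {0..m} (\<lambda>w. ex s w * ex t w)"
  proof (rule integral_cong)
    fix w assume "w \<in> {0..m}"
    thus "kern lam (\<lambda>t w. - lam * exp (w - t)) s w * kern lam (\<lambda>t w. - lam * exp (w - t)) t w = ex s w * ex t w"
      using kernX[of w s lam] kernX[of w t lam] by (simp add: m_def ex_def)
  qed
  define P where "P w = - lam\<^sup>2 * sg\<^sup>2 * (fY lam sg w * ((1 - exp (w - s)) * (1 - exp (w - t))))" for w
  have "((\<lambda>w. ey s w * ey t w - ex s w * ex t w) has_integral (P m - P 0)) {0..m}"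
  proof (rule fundamental_theorem_of_calculus[OF m0])
    fix u assume u: "u \<in> {0..m}"
    hence u0: "u \<ge> 0" by simp
    have dF: "(fY lam sg has_real_derivative fY' lam sg u) (at u within {0..m})"
      using has_field_derivative_at_within[OF fY_deriv[OF lam u0]] by (simp add: fY_def[abs_def])
    have dS: "((\<lambda>u. 1 - exp (u - s)) has_real_derivative - exp (u - s)) (at u within {0..m})"
      using DERIV_diff[OF DERIV_const exp_shift_deriv[where w=u and s=s and S="{0..m}"], of 1] by simp
    have dT: "((\<lambda>u. 1 - exp (u - t)) has_real_derivative - exp (u - t)) (at u within {0..m})"
      using DERIV_diff[OF DERIV_const exp_shift_deriv[where w=u and s=t and S="{0..m}"], of 1] by simp
    have "(P has_real_derivative - lam\<^sup>2 * sg\<^sup>2 * (fY' lam sg u * ((1 - exp (u - s)) * (1 - exp (u - t)))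
            + (- exp (u - s) * (1 - exp (u - t)) + - exp (u - t) * (1 - exp (u - s))) * fY lam sg u)) (at u within {0..m})"
      unfolding P_def by (rule DERIV_cmult[OF DERIV_mult[OF dF DERIV_mult[OF dS dT]]])
    moreover have "- lam\<^sup>2 * sg\<^sup>2 * (fY' lam sg u * ((1 - exp (u - s)) * (1 - exp (u - t)))
            + (- exp (u - s) * (1 - exp (u - t)) + - exp (u - t) * (1 - exp (u - s))) * fY lam sg u)
        = ey s u * ey t u - ex s u * ex t u"
    proof -
      have fd: "fY' lam sg u = - sg\<^sup>2 * (fY lam sg u)\<^sup>2"
        unfolding fY_def fY'_def by (simp add: power_divide)
      show ?thesis unfolding fd ey_def ex_def
        by (simp add: algebra_simps power2_eq_square)
    qed
    ultimately show "(P has_vector_derivative ey s u * ey t u - ex s u * ex t u) (at u within {0..m})"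
      by (simp add: has_real_derivative_iff_has_vector_derivative)
  qed
  hence "integral {0..m} (\<lambda>w. ey s w * ey t w - ex s w * ex t w) = P m - P 0" by (rule integral_unique)
  moreover have "P m = 0" unfolding P_def m_def by (cases "s \<le> t") auto
  moreover have "P 0 = - sg\<^sup>2 * (1 - exp (- s)) * (1 - exp (- t))"
    using lam by (simp add: P_def fY_def field_simps)
  moreover have "integral {0..m} (\<lambda>w. ey s w * ey t w - ex s w * ex t w)
      = integral {0..m} (\<lambda>w. ey s w * ey t w) - integral {0..m} (\<lambda>w. ex s w * ex t w)"
  proof (rule integral_diff)
    have fc: "continuous_on {0..m} (fY lam sg)" by (rule fY_cont[OF lam])
    show "(\<lambda>w. ey s w * ey t w) integrable_on {0..m}"
      unfolding ey_def ex_def by (intro integrable_continuous_interval continuous_intros fc)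
    show "(\<lambda>w. ex s w * ex t w) integrable_on {0..m}"
      unfolding ex_def by (intro integrable_continuous_interval continuous_intros)
  qed
  ultimately show ?thesis using eqX eqY by (simp add: m_def algebra_simps)
qed

lemma path_meas:
  assumes "\<And>t. B t \<in> borel_measurable M"
  shows "path B \<in> measurable M (Pi\<^sub>M {0..} (\<lambda>_. borel))"
  unfolding path_def using measurable_restrict[of "{0..}" "\<lambda>t \<omega>. B t \<omega>" M "\<lambda>_. borel"] assms by simp

lemma path_space: "path B \<omega> \<in> space (Pi\<^sub>M {0..} (\<lambda>_. borel))"
  by (simp add: path_def space_PiM)

lemma vimage_in:
  assumes f: "f \<in> borel_measurable N" and A: "A \<in> sets (borel :: complex measure)"
    and Z: "\<And>\<omega>. \<omega> \<in> space M \<Longrightarrow> Z \<omega> \<in> space N"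
  shows "(\<lambda>\<omega>. f (Z \<omega>)) -` A \<inter> space M \<in> sets (vimage_algebra (space M) Z N)"
proof -
  have "f -` A \<inter> space N \<in> sets N" using measurable_sets[OF f A] .
  hence "Z -` (f -` A \<inter> space N) \<inter> space M \<in> sets (vimage_algebra (space M) Z N)"
    by (rule in_vimage_algebra)
  also have "Z -` (f -` A \<inter> space N) \<inter> space M = (\<lambda>\<omega>. f (Z \<omega>)) -` A \<inter> space M"
    using Z by auto
  finally show ?thesis .
qed

lemma indep3_prod:
  fixes U V :: "'a \<Rightarrow> real" and Fn :: "(real \<Rightarrow> real) \<Rightarrow> real"
  assumes M: "prob_space M" and ind: "indep3_rv M borel U borel V (Pi\<^sub>M {0..} (\<lambda>_. borel)) (path B)"
    and U: "U \<in> borel_measurable M" and V: "V \<in> borel_measurable M"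
    and Bm: "\<And>t. B t \<in> borel_measurable M"
    and Fn: "Fn \<in> borel_measurable (Pi\<^sub>M {0..} (\<lambda>_. borel))"
  shows "(CLINT \<omega>|M. iexp (a * U \<omega> + b * V \<omega> + Fn (path B \<omega>)))
       = (CLINT \<omega>|M. iexp (a * U \<omega>)) * (CLINT \<omega>|M. iexp (b * V \<omega>)) * (CLINT \<omega>|M. iexp (Fn (path B \<omega>)))"
proof -
  interpret prob_space M by (rule M)
  have pm[measurable]: "path B \<in> measurable M (Pi\<^sub>M {0..} (\<lambda>_. borel))" by (rule path_meas[OF Bm])
  note [measurable] = U V Fn
  define Y :: "nat \<Rightarrow> 'a \<Rightarrow> complex" where
    "Y i = (if i = 0 then (\<lambda>\<omega>. iexp (a * U \<omega>)) else if i = 1 then (\<lambda>\<omega>. iexp (b * V \<omega>))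
            else (\<lambda>\<omega>. iexp (Fn (path B \<omega>))))" for i
  have Ym: "Y i \<in> borel_measurable M" for i unfolding Y_def by (auto intro!: measurable_If)
  have indY: "indep_vars (\<lambda>_. borel) Y {0, 1, 2}"
  proof -
    have "indep_sets (\<lambda>i. {Y i -` A \<inter> space M |A. A \<in> sets borel}) {0, 1, 2}"
    proof (rule indep_sets_mono_sets[OF ind[unfolded indep3_rv_def]])
      fix i :: nat assume i: "i \<in> {0, 1, 2}"
      show "{Y i -` A \<inter> space M |A. A \<in> sets borel} \<subseteq>
        (if i = 0 then sets (vimage_algebra (space M) U borel) else if i = 1 then sets (vimage_algebra (space M) V borel)
         else sets (vimage_algebra (space M) (path B) (Pi\<^sub>M {0..} (\<lambda>_. borel))))"
      proof -
        have h0: "Y 0 -` A \<inter> space M \<in> sets (vimage_algebra (space M) U borel)" if A: "A \<in> sets borel" for A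
          unfolding Y_def using vimage_in[of "\<lambda>x. iexp (a * x)" borel A M U] A by simp
        have h1: "Y 1 -` A \<inter> space M \<in> sets (vimage_algebra (space M) V borel)" if A: "A \<in> sets borel" for A
          unfolding Y_def using vimage_in[of "\<lambda>x. iexp (b * x)" borel A M V] A by simp
        have h2: "Y 2 -` A \<inter> space M \<in> sets (vimage_algebra (space M) (path B) (Pi\<^sub>M {0..} (\<lambda>_. borel)))"
          if A: "A \<in> sets borel" for A
          unfolding Y_def using vimage_in[of "\<lambda>p. iexp (Fn p)" "Pi\<^sub>M {0..} (\<lambda>_. borel)" A M "path B"] A path_space[of B]
          by simp
        show ?thesis using i h0 h1 h2 by auto
      qed
    qed
    thus ?thesis unfolding indep_vars_def2 using Ym by auto
  qed
  have int: "integrable M (Y i)" for i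
    unfolding Y_def by (auto intro!: integrable_iexp)
  have "(CLINT \<omega>|M. iexp (a * U \<omega> + b * V \<omega> + Fn (path B \<omega>))) = (CLINT \<omega>|M. (\<Prod>i\<in>{0, 1, 2}. Y i \<omega>))"
    by (intro Bochner_Integration.integral_cong refl) (simp add: Y_def exp_add[symmetric] algebra_simps)
  also have "\<dots> = (\<Prod>i\<in>{0, 1, 2}. CLINT \<omega>|M. Y i \<omega>)"
    by (rule indep_vars_lebesgue_integral) (use indY int in auto)
  also have "\<dots> = (CLINT \<omega>|M. iexp (a * U \<omega>)) * (CLINT \<omega>|M. iexp (b * V \<omega>)) * (CLINT \<omega>|M. iexp (Fn (path B \<omega>)))"
    by (simp add: Y_def)
  finally show ?thesis .
qed

lemma indep2_prod:
  fixes U :: "'a \<Rightarrow> real" and Fn :: "(real \<Rightarrow> real) \<Rightarrow> real"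
  assumes M: "prob_space M" and ind: "indep2_rv M borel U (Pi\<^sub>M {0..} (\<lambda>_. borel)) (path B)"
    and U: "U \<in> borel_measurable M"
    and Bm: "\<And>t. B t \<in> borel_measurable M"
    and Fn: "Fn \<in> borel_measurable (Pi\<^sub>M {0..} (\<lambda>_. borel))"
  shows "(CLINT \<omega>|M. iexp (a * U \<omega> + Fn (path B \<omega>)))
       = (CLINT \<omega>|M. iexp (a * U \<omega>)) * (CLINT \<omega>|M. iexp (Fn (path B \<omega>)))"
proof -
  interpret prob_space M by (rule M)
  have pm[measurable]: "path B \<in> measurable M (Pi\<^sub>M {0..} (\<lambda>_. borel))" by (rule path_meas[OF Bm])
  note [measurable] = U Fn
  define Y :: "bool \<Rightarrow> 'a \<Rightarrow> complex" where
    "Y i = (if i then (\<lambda>\<omega>. iexp (a * U \<omega>)) else (\<lambda>\<omega>. iexp (Fn (path B \<omega>))))" for i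
  have Ym: "Y i \<in> borel_measurable M" for i unfolding Y_def by (auto intro!: measurable_If)
  have indY: "indep_vars (\<lambda>_. borel) Y UNIV"
  proof -
    have "indep_sets (\<lambda>i. {Y i -` A \<inter> space M |A. A \<in> sets borel}) UNIV"
    proof (rule indep_sets_mono_sets[OF ind[unfolded indep2_rv_def indep_set_def]])
      fix i :: bool
      show "{Y i -` A \<inter> space M |A. A \<in> sets borel} \<subseteq>
        case_bool (sets (vimage_algebra (space M) U borel)) (sets (vimage_algebra (space M) (path B) (Pi\<^sub>M {0..} (\<lambda>_. borel)))) i"
      proof -
        have h0: "Y True -` A \<inter> space M \<in> sets (vimage_algebra (space M) U borel)" if A: "A \<in> sets borel" for A
          unfolding Y_def using vimage_in[of "\<lambda>x. iexp (a * x)" borel A M U] A by simp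
        have h2: "Y False -` A \<inter> space M \<in> sets (vimage_algebra (space M) (path B) (Pi\<^sub>M {0..} (\<lambda>_. borel)))"
          if A: "A \<in> sets borel" for A
          unfolding Y_def using vimage_in[of "\<lambda>p. iexp (Fn p)" "Pi\<^sub>M {0..} (\<lambda>_. borel)" A M "path B"] A path_space[of B]
          by simp
        show ?thesis using h0 h2 by (cases i) auto
      qed
    qed
    thus ?thesis unfolding indep_vars_def2 using Ym by auto
  qed
  have int: "integrable M (Y i)" for i
    unfolding Y_def by (auto intro!: integrable_iexp)
  have "(CLINT \<omega>|M. iexp (a * U \<omega> + Fn (path B \<omega>))) = (CLINT \<omega>|M. (\<Prod>i\<in>UNIV. Y i \<omega>))"
    by (intro Bochner_Integration.integral_cong refl) (simp add: Y_def UNIV_bool exp_add[symmetric] algebra_simps)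
  also have "\<dots> = (\<Prod>i\<in>UNIV. CLINT \<omega>|M. Y i \<omega>)"
    by (rule indep_vars_lebesgue_integral) (use indY int in auto)
  also have "\<dots> = (CLINT \<omega>|M. iexp (a * U \<omega>)) * (CLINT \<omega>|M. iexp (Fn (path B \<omega>)))"
    by (simp add: Y_def UNIV_bool)
  finally show ?thesis .
qed

lemma gchar_scale: "gchar m v (u * a) = gchar (a * m) (a\<^sup>2 * v) u"
  by (simp add: gchar_def power_mult_distrib mult_ac)

lemma gchar_mult: "gchar m1 v1 u * gchar m2 v2 u = gchar (m1 + m2) (v1 + v2) u"
proof -
  have e1: "iexp (u * m1) * iexp (u * m2) = iexp (u * (m1 + m2))"
    by (simp add: exp_add[symmetric] distrib_left)
  have e2: "exp (- (v1 * u\<^sup>2) / 2) * exp (- (v2 * u\<^sup>2) / 2) = exp (- ((v1 + v2) * u\<^sup>2) / 2)"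
    by (simp add: exp_add[symmetric] field_simps)
  have "gchar m1 v1 u * gchar m2 v2 u = (iexp (u * m1) * iexp (u * m2)) *
      complex_of_real (exp (- (v1 * u\<^sup>2) / 2) * exp (- (v2 * u\<^sup>2) / 2))"
    by (simp add: gchar_def mult_ac)
  also have "\<dots> = gchar (m1 + m2) (v1 + v2) u" by (simp only: e1 e2 gchar_def)
  finally show ?thesis .
qed

lemma gchar_nonneg_var:
  assumes M: "prob_space M" and Z: "Z \<in> borel_measurable M"
    and ch: "\<And>u. char (distr M borel Z) u = gchar m v u"
  shows "v \<ge> 0"
proof -
  interpret prob_space M by (rule M)
  have rd: "real_distribution (distr M borel Z)"
    using Z by (auto simp: real_distribution_def real_distribution_axioms_def intro!: prob_space_distr)
  have "norm (char (distr M borel Z) 1) \<le> 1" by (rule real_distribution.cmod_char_le_1[OF rd])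
  hence "exp (- v / 2) \<le> 1" by (simp add: ch gchar_def norm_mult)
  thus ?thesis by simp
qed

lemma gaussian_char:
  assumes M: "prob_space M" and g: "real_gaussian M Z"
  shows "\<exists>m v. v \<ge> 0 \<and> (\<forall>u. char (distr M borel Z) u = gchar m v u)"
proof -
  from g have Z: "Z \<in> borel_measurable M" by (simp add: real_gaussian_def)
  from g consider (c) c where "distr M lborel Z = return lborel c"
    | (n) mu s where "s > 0" "distributed M lborel Z (normal_density mu s)"
    unfolding real_gaussian_def by blast
  thus ?thesis
  proof cases
    case c
    have "distr M borel Z = return borel c"
      using c by (simp add: distr_lborel_borel return_cong[of lborel borel])
    hence "char (distr M borel Z) u = gchar c 0 u" for u by (simp add: char_return gchar_def)
    thus ?thesis by blast
  next
    case n
    have "distr M borel Z = density lborel (normal_density mu s)"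
      using n(2) by (simp add: distributed_def distr_lborel_borel)
    hence "char (distr M borel Z) u = gchar mu (s\<^sup>2) u" for u by (simp add: char_normal[OF n(1)])
    thus ?thesis by (intro exI[of _ mu] exI[of _ "s\<^sup>2"]) auto
  qed
qed

lemma cross_moment:
  fixes f g :: "'a \<Rightarrow> real"
  assumes "integrable M (\<lambda>x. (f x + g x)\<^sup>2)" "integrable M (\<lambda>x. (f x)\<^sup>2)" "integrable M (\<lambda>x. (g x)\<^sup>2)"
  shows "(\<integral>x. f x * g x \<partial>M) = ((\<integral>x. (f x + g x)\<^sup>2 \<partial>M) - (\<integral>x. (f x)\<^sup>2 \<partial>M) - (\<integral>x. (g x)\<^sup>2 \<partial>M)) / 2"
proof -
  have "(\<integral>x. f x * g x \<partial>M) = (\<integral>x. ((f x + g x)\<^sup>2 - (f x)\<^sup>2 - (g x)\<^sup>2) / 2 \<partial>M)"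
    by (intro Bochner_Integration.integral_cong refl) (simp add: power2_eq_square algebra_simps)
  also have "\<dots> = (\<integral>x. ((f x + g x)\<^sup>2 - (f x)\<^sup>2 - (g x)\<^sup>2) \<partial>M) / 2"
    by simp
  also have "(\<integral>x. ((f x + g x)\<^sup>2 - (f x)\<^sup>2 - (g x)\<^sup>2) \<partial>M)
      = (\<integral>x. (f x + g x)\<^sup>2 \<partial>M) - (\<integral>x. (f x)\<^sup>2 \<partial>M) - (\<integral>x. (g x)\<^sup>2 \<partial>M)"
    using assms by simp
  finally show ?thesis .
qed

lemma cross_integrable:
  fixes f g :: "'a \<Rightarrow> real"
  assumes "integrable M (\<lambda>x. (f x + g x)\<^sup>2)" "integrable M (\<lambda>x. (f x)\<^sup>2)" "integrable M (\<lambda>x. (g x)\<^sup>2)"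
  shows "integrable M (\<lambda>x. f x * g x)"
proof -
  have "integrable M (\<lambda>x. ((f x + g x)\<^sup>2 - (f x)\<^sup>2 - (g x)\<^sup>2) / 2)" using assms by simp
  also have "(\<lambda>x. ((f x + g x)\<^sup>2 - (f x)\<^sup>2 - (g x)\<^sup>2) / 2) = (\<lambda>x. f x * g x)"
    by (simp add: power2_eq_square algebra_simps)
  finally show ?thesis .
qed

lemma sum_lin3:
  fixes c a b r :: "real \<Rightarrow> real" and x y :: real
  shows "(\<Sum>t\<in>F. c t * (a t * x + b t * y + r t)) = (\<Sum>t\<in>F. c t * a t) * x + (\<Sum>t\<in>F. c t * b t) * y + (\<Sum>t\<in>F. c t * r t)"
proof -
  have "(\<Sum>t\<in>F. c t * (a t * x + b t * y + r t)) = (\<Sum>t\<in>F. (c t * a t) * x + (c t * b t) * y + c t * r t)"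
    by (intro sum.cong refl) (simp add: algebra_simps)
  also have "\<dots> = (\<Sum>t\<in>F. c t * a t) * x + (\<Sum>t\<in>F. c t * b t) * y + (\<Sum>t\<in>F. c t * r t)"
    by (simp add: sum.distrib sum_distrib_right)
  finally show ?thesis .
qed

lemma Fn_meas:
  fixes u :: real and \<gamma> x :: "nat \<Rightarrow> real"
  assumes "\<And>k. k \<le> n \<Longrightarrow> 0 \<le> x k"
  shows "(\<lambda>p. u * (\<Sum>k<n. \<gamma> k * (p (x (Suc k)) - p (x k)))) \<in> borel_measurable (Pi\<^sub>M {0..} (\<lambda>_. borel))"
proof -
  have c: "(\<lambda>p::real\<Rightarrow>real. p (x k)) \<in> borel_measurable (Pi\<^sub>M {0..} (\<lambda>_. borel))" if "k \<le> n" for k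
    by (rule measurable_component_singleton) (use assms that in simp)
  have "(\<lambda>p::real\<Rightarrow>real. \<gamma> k * (p (x (Suc k)) - p (x k))) \<in> borel_measurable (Pi\<^sub>M {0..} (\<lambda>_. borel))" if "k < n" for k
  proof -
    have kk: "k \<le> n" "Suc k \<le> n" using that by auto
    have d: "(\<lambda>p::real\<Rightarrow>real. p (x (Suc k)) - p (x k)) \<in> borel_measurable (Pi\<^sub>M {0..} (\<lambda>_. borel))"
      by (rule borel_measurable_diff[OF c[OF kk(2)] c[OF kk(1)]])
    show ?thesis by (rule borel_measurable_times[OF borel_measurable_const d])
  qed
  hence "(\<lambda>p::real\<Rightarrow>real. \<Sum>k<n. \<gamma> k * (p (x (Suc k)) - p (x k))) \<in> borel_measurable (Pi\<^sub>M {0..} (\<lambda>_. borel))"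
    by (intro borel_measurable_sum) auto
  thus ?thesis by (rule borel_measurable_times[OF borel_measurable_const])
qed

lemma path_sum:
  fixes u :: real and \<gamma> x :: "nat \<Rightarrow> real" and B :: "real \<Rightarrow> 'a \<Rightarrow> real"
  assumes "\<And>k. k \<le> n \<Longrightarrow> 0 \<le> x k"
  shows "u * (\<Sum>k<n. \<gamma> k * (path B \<omega> (x (Suc k)) - path B \<omega> (x k))) = u * (\<Sum>k<n. \<gamma> k * (B (x (Suc k)) \<omega> - B (x k) \<omega>))"
proof -
  have "(\<Sum>k<n. \<gamma> k * (path B \<omega> (x (Suc k)) - path B \<omega> (x k))) = (\<Sum>k<n. \<gamma> k * (B (x (Suc k)) \<omega> - B (x k) \<omega>))"
  proof (rule sum.cong[OF refl])
    fix k assume "k \<in> {..<n}"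
    hence "0 \<le> x k" "0 \<le> x (Suc k)" using assms by auto
    thus "\<gamma> k * (path B \<omega> (x (Suc k)) - path B \<omega> (x k)) = \<gamma> k * (B (x (Suc k)) \<omega> - B (x k) \<omega>)"
      by (simp add: path_def)
  qed
  thus ?thesis by simp
qed

lemma indX_aux:
  fixes U V :: "'a \<Rightarrow> real"
  assumes M: "prob_space M" and ind: "indep3_rv M borel U borel V (Pi\<^sub>M {0..} (\<lambda>_. borel)) (path B)"
    and U: "U \<in> borel_measurable M" and V: "V \<in> borel_measurable M"
    and Bm: "\<And>t. B t \<in> borel_measurable M"
    and x: "\<forall>i<n. x i < x (Suc i)" "0 \<le> x 0"
  shows "(CLINT \<omega>|M. iexp (u * (a * U \<omega> + b * V \<omega> + (\<Sum>k<n. \<gamma> k * (B (x (Suc k)) \<omega> - B (x k) \<omega>)))))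
       = (CLINT \<omega>|M. iexp (u * (a * U \<omega> + b * V \<omega>))) * (CLINT \<omega>|M. iexp (u * (\<Sum>k<n. \<gamma> k * (B (x (Suc k)) \<omega> - B (x k) \<omega>))))"
proof -
  interpret prob_space M by (rule M)
  have xk: "\<And>k. k \<le> n \<Longrightarrow> 0 \<le> x k" using grid_mono[OF x(1), of 0] x(2) by force
  define Fn where "Fn p = u * (\<Sum>k<n. \<gamma> k * (p (x (Suc k)) - p (x k)))" for p :: "real \<Rightarrow> real"
  have Fnm: "Fn \<in> borel_measurable (Pi\<^sub>M {0..} (\<lambda>_. borel))" unfolding Fn_def by (rule Fn_meas[OF xk])
  have pv: "Fn (path B \<omega>) = u * (\<Sum>k<n. \<gamma> k * (B (x (Suc k)) \<omega> - B (x k) \<omega>))" for \<omega>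
    unfolding Fn_def by (rule path_sum[OF xk])
  have z: "(\<lambda>_ :: real \<Rightarrow> real. 0 :: real) \<in> borel_measurable (Pi\<^sub>M {0..} (\<lambda>_. borel))" by simp
  have "(CLINT \<omega>|M. iexp (u * (a * U \<omega> + b * V \<omega> + (\<Sum>k<n. \<gamma> k * (B (x (Suc k)) \<omega> - B (x k) \<omega>)))))
      = (CLINT \<omega>|M. iexp ((u * a) * U \<omega> + (u * b) * V \<omega> + Fn (path B \<omega>)))"
    by (intro Bochner_Integration.integral_cong refl) (simp add: pv algebra_simps)
  also have "\<dots> = (CLINT \<omega>|M. iexp ((u * a) * U \<omega>)) * (CLINT \<omega>|M. iexp ((u * b) * V \<omega>)) * (CLINT \<omega>|M. iexp (Fn (path B \<omega>)))"
    by (rule indep3_prod[OF M ind U V Bm Fnm])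
  also have "(CLINT \<omega>|M. iexp ((u * a) * U \<omega>)) * (CLINT \<omega>|M. iexp ((u * b) * V \<omega>))
      = (CLINT \<omega>|M. iexp ((u * a) * U \<omega> + (u * b) * V \<omega> + (\<lambda>_. 0) (path B \<omega>)))"
    using indep3_prod[OF M ind U V Bm z, of "u * a" "u * b"] by (simp add: prob_space)
  also have "\<dots> = (CLINT \<omega>|M. iexp (u * (a * U \<omega> + b * V \<omega>)))"
    by (intro Bochner_Integration.integral_cong refl) (simp add: algebra_simps)
  also have "(CLINT \<omega>|M. iexp (Fn (path B \<omega>))) = (CLINT \<omega>|M. iexp (u * (\<Sum>k<n. \<gamma> k * (B (x (Suc k)) \<omega> - B (x k) \<omega>))))"
    by (simp add: pv)
  finally show ?thesis .
qed

lemma charX_aux: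
  fixes U V :: "'a \<Rightarrow> real"
  assumes M: "prob_space M" and ind: "indep3_rv M borel U borel V (Pi\<^sub>M {0..} (\<lambda>_. borel)) (path B)"
    and U: "U \<in> borel_measurable M" and V: "V \<in> borel_measurable M"
    and Bm: "\<And>t. B t \<in> borel_measurable M"
  shows "char (distr M borel (\<lambda>\<omega>. a * U \<omega> + b * V \<omega>)) u = char (distr M borel U) (u * a) * char (distr M borel V) (u * b)"
proof -
  interpret prob_space M by (rule M)
  have z: "(\<lambda>_ :: real \<Rightarrow> real. 0 :: real) \<in> borel_measurable (Pi\<^sub>M {0..} (\<lambda>_. borel))" by simp
  have "char (distr M borel (\<lambda>\<omega>. a * U \<omega> + b * V \<omega>)) u = (CLINT \<omega>|M. iexp ((u * a) * U \<omega> + (u * b) * V \<omega> + (\<lambda>_. 0) (path B \<omega>)))"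
    using U V by (subst char_distr) (auto simp: algebra_simps)
  also have "\<dots> = (CLINT \<omega>|M. iexp ((u * a) * U \<omega>)) * (CLINT \<omega>|M. iexp ((u * b) * V \<omega>))"
    using indep3_prod[OF M ind U V Bm z, of "u * a" "u * b"] by (simp add: prob_space)
  also have "\<dots> = char (distr M borel U) (u * a) * char (distr M borel V) (u * b)"
    using U V by (simp add: char_distr mult_ac)
  finally show ?thesis .
qed

lemma indY_aux:
  fixes U :: "'a \<Rightarrow> real"
  assumes M: "prob_space M" and ind: "indep2_rv M borel U (Pi\<^sub>M {0..} (\<lambda>_. borel)) (path B)"
    and U: "U \<in> borel_measurable M"
    and Bm: "\<And>t. B t \<in> borel_measurable M"
    and x: "\<forall>i<n. x i < x (Suc i)" "0 \<le> x 0"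
  shows "(CLINT \<omega>|M. iexp (u * (a * U \<omega> + b + (\<Sum>k<n. \<gamma> k * (B (x (Suc k)) \<omega> - B (x k) \<omega>)))))
       = (CLINT \<omega>|M. iexp (u * (a * U \<omega> + b))) * (CLINT \<omega>|M. iexp (u * (\<Sum>k<n. \<gamma> k * (B (x (Suc k)) \<omega> - B (x k) \<omega>))))"
proof -
  interpret prob_space M by (rule M)
  have xk: "\<And>k. k \<le> n \<Longrightarrow> 0 \<le> x k" using grid_mono[OF x(1), of 0] x(2) by force
  define Fn where "Fn p = u * (\<Sum>k<n. \<gamma> k * (p (x (Suc k)) - p (x k)))" for p :: "real \<Rightarrow> real"
  have Fnm: "Fn \<in> borel_measurable (Pi\<^sub>M {0..} (\<lambda>_. borel))" unfolding Fn_def by (rule Fn_meas[OF xk])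
  have pv: "Fn (path B \<omega>) = u * (\<Sum>k<n. \<gamma> k * (B (x (Suc k)) \<omega> - B (x k) \<omega>))" for \<omega>
    unfolding Fn_def by (rule path_sum[OF xk])
  have z: "(\<lambda>_ :: real \<Rightarrow> real. 0 :: real) \<in> borel_measurable (Pi\<^sub>M {0..} (\<lambda>_. borel))" by simp
  have "(CLINT \<omega>|M. iexp (u * (a * U \<omega> + b + (\<Sum>k<n. \<gamma> k * (B (x (Suc k)) \<omega> - B (x k) \<omega>)))))
      = (CLINT \<omega>|M. iexp (u * b) * iexp ((u * a) * U \<omega> + Fn (path B \<omega>)))"
    by (intro Bochner_Integration.integral_cong refl) (simp add: pv algebra_simps exp_add[symmetric])
  also have "\<dots> = iexp (u * b) * (CLINT \<omega>|M. iexp ((u * a) * U \<omega> + Fn (path B \<omega>)))" by simp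
  also have "(CLINT \<omega>|M. iexp ((u * a) * U \<omega> + Fn (path B \<omega>))) = (CLINT \<omega>|M. iexp ((u * a) * U \<omega>)) * (CLINT \<omega>|M. iexp (Fn (path B \<omega>)))"
    by (rule indep2_prod[OF M ind U Bm Fnm])
  also have "(CLINT \<omega>|M. iexp (Fn (path B \<omega>))) = (CLINT \<omega>|M. iexp (u * (\<Sum>k<n. \<gamma> k * (B (x (Suc k)) \<omega> - B (x k) \<omega>))))"
    by (simp add: pv)
  also have "iexp (u * b) * ((CLINT \<omega>|M. iexp ((u * a) * U \<omega>)) * (CLINT \<omega>|M. iexp (u * (\<Sum>k<n. \<gamma> k * (B (x (Suc k)) \<omega> - B (x k) \<omega>)))))
      = (CLINT \<omega>|M. iexp (u * b) * iexp ((u * a) * U \<omega>)) * (CLINT \<omega>|M. iexp (u * (\<Sum>k<n. \<gamma> k * (B (x (Suc k)) \<omega> - B (x k) \<omega>))))"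
    by simp
  also have "(CLINT \<omega>|M. iexp (u * b) * iexp ((u * a) * U \<omega>)) = (CLINT \<omega>|M. iexp (u * (a * U \<omega> + b)))"
    by (intro Bochner_Integration.integral_cong refl) (simp add: algebra_simps exp_add[symmetric])
  finally show ?thesis .
qed

lemma charY_aux:
  fixes U :: "'a \<Rightarrow> real"
  assumes M: "prob_space M" and U: "U \<in> borel_measurable M"
  shows "char (distr M borel (\<lambda>\<omega>. a * U \<omega> + b)) u = iexp (u * b) * char (distr M borel U) (u * a)"
proof -
  have "char (distr M borel (\<lambda>\<omega>. a * U \<omega> + b)) u = (CLINT \<omega>|M. iexp (u * b) * iexp ((u * a) * U \<omega>))"
    using U by (subst char_distr) (auto simp: algebra_simps exp_add[symmetric] intro!: Bochner_Integration.integral_cong)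
  also have "\<dots> = iexp (u * b) * char (distr M borel U) (u * a)"
    using U by (simp add: char_distr)
  finally show ?thesis .
qed

theorem proposition5p3:
  fixes M :: "'a measure" and N :: "'b measure"
    and X B :: "real \<Rightarrow> 'a \<Rightarrow> real" and G :: "'a \<Rightarrow> real"
    and Y W :: "real \<Rightarrow> 'b \<Rightarrow> real"
    and lam J sigma :: real
  assumes lam: "lam \<noteq> 0" and sigma: "sigma > 0"
    and M: "prob_space M" and N: "prob_space N"
    and B: "brownian_motion M B"
    and G: "distributed M lborel G (normal_density J sigma)"
    and X_meas: "\<forall>t. X t \<in> borel_measurable M"
    and indep_XGB: "indep3_rv M borel (X 0) borel G (Pi\<^sub>M {0..} (\<lambda>_. borel)) (path B)"
    and X_sol: "AE \<omega> in M. continuous_on {0..} (\<lambda>t. X t \<omega>) \<and>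
                 (\<forall>t\<ge>0. X t \<omega> = X 0 \<omega> + integral {0..t} (\<lambda>s. - X s \<omega> + G \<omega>)
                                    + lam * (B t \<omega> - B 0 \<omega>))"
    and W: "brownian_motion N W"
    and Y_meas: "\<forall>t. Y t \<in> borel_measurable N"
    and indep3: "indep2_rv N borel (Y 0) (Pi\<^sub>M {0..} (\<lambda>_. borel)) (path W)"
    and Y_sol: "AE \<omega> in N. continuous_on {0..} (\<lambda>t. Y t \<omega>) \<and>
                 (\<forall>t\<ge>0. Y t \<omega> = Y 0 \<omega> + integral {0..t} (\<lambda>s. - Y s \<omega> + J
                     + lam * sigma\<^sup>2 * wiener_integral (\<lambda>r. 1 / (lam\<^sup>2 + sigma\<^sup>2 * r)) W s \<omega>)
                   + lam * (W t \<omega> - W 0 \<omega>))"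
    and X0_gauss: "real_gaussian M (X 0)"
    and same_init: "distr M lborel (X 0) = distr N lborel (Y 0)"
  shows "gaussian_process M X {0..} \<and> gaussian_process N Y {0..} \<and>
         (\<forall>t\<ge>0. prob_space.expectation M (X t) = prob_space.expectation N (Y t)) \<and>
         (\<forall>s\<ge>0. \<forall>t\<ge>0.
            prob_space.expectation M (\<lambda>\<omega>. X s \<omega> * X t \<omega>)
              - prob_space.expectation M (X s) * prob_space.expectation M (X t)
          = prob_space.expectation N (\<lambda>\<omega>. Y s \<omega> * Y t \<omega>)
              - prob_space.expectation N (Y s) * prob_space.expectation N (Y t))"
proof -
  interpret MM: prob_space M by (rule M)
  interpret NN: prob_space N by (rule N)
  have Bm[measurable]: "\<And>t. B t \<in> borel_measurable M" using B by (simp add: brownian_motion_def)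
  have Wm[measurable]: "\<And>t. W t \<in> borel_measurable N" using W by (simp add: brownian_motion_def)
  have Xm[measurable]: "\<And>t. X t \<in> borel_measurable M" using X_meas by simp
  have Ym[measurable]: "\<And>t. Y t \<in> borel_measurable N" using Y_meas by simp
  have Gm[measurable]: "G \<in> borel_measurable M"
    using distributed_measurable[OF G] by simp
  define qX where "qX = (\<lambda>t w. - lam * exp (w - t))"
  define qYY where "qYY = qY lam sigma"
  have AE_X: "AE \<omega> in M. \<forall>t\<ge>0. X t \<omega> = exp (- t) * X 0 \<omega> + (1 - exp (- t)) * G \<omega>
           + (lam * B t \<omega> + integral {0..t} (\<lambda>w. qX t w * B w \<omega>))"
  proof -
    have "AE \<omega> in M. B 0 \<omega> = 0" "AE \<omega> in M. continuous_on {0..} (\<lambda>t. B t \<omega>)"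
      using B by (auto simp: brownian_motion_def)
    thus ?thesis using X_sol
    proof eventually_elim
      case (elim \<omega>)
      show ?case
      proof (intro allI impI)
        fix t :: real assume t: "t \<ge> 0"
        show "X t \<omega> = exp (- t) * X 0 \<omega> + (1 - exp (- t)) * G \<omega>
           + (lam * B t \<omega> + integral {0..t} (\<lambda>w. qX t w * B w \<omega>))"
        proof -
          have "X t \<omega> = exp (- t) * X 0 \<omega> + (1 - exp (- t)) * G \<omega>
           + (lam * B t \<omega> + integral {0..t} (\<lambda>w. (- lam * exp (w - t)) * B w \<omega>))"
            by (rule X_repr[where X=X and B=B and G=G and \<omega>=\<omega>, OF conjunct1[OF elim(3)] elim(2) elim(1) conjunct2[OF elim(3)] t])
          thus ?thesis by (simp add: qX_def)
        qed
      qed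
    qed
  qed
  have AE_Y: "AE \<omega> in N. \<forall>t\<ge>0. Y t \<omega> = exp (- t) * Y 0 \<omega> + (1 - exp (- t)) * J
           + (lam * W t \<omega> + integral {0..t} (\<lambda>w. qYY t w * W w \<omega>))"
  proof -
    have "AE \<omega> in N. W 0 \<omega> = 0" "AE \<omega> in N. continuous_on {0..} (\<lambda>t. W t \<omega>)"
      using W by (auto simp: brownian_motion_def)
    thus ?thesis using Y_sol
    proof eventually_elim
      case (elim \<omega>)
      show ?case
      proof (intro allI impI)
        fix t :: real assume t: "t \<ge> 0"
        show "Y t \<omega> = exp (- t) * Y 0 \<omega> + (1 - exp (- t)) * J
           + (lam * W t \<omega> + integral {0..t} (\<lambda>w. qYY t w * W w \<omega>))"
        proof -
          have "Y t \<omega> = exp (- t) * Y 0 \<omega> + (1 - exp (- t)) * J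
           + (lam * W t \<omega> + integral {0..t} (\<lambda>w. qY lam sigma t w * W w \<omega>))"
            by (rule Y_repr[where Y=Y and W=W and \<omega>=\<omega>, OF lam conjunct1[OF elim(3)] elim(2) elim(1) conjunct2[OF elim(3)] t])
          thus ?thesis by (simp add: qYY_def)
        qed
      qed
    qed
  qed
  obtain m0 v0 where v0: "v0 \<ge> 0" and chX0: "\<And>u. char (distr M borel (X 0)) u = gchar m0 v0 u"
    using gaussian_char[OF M X0_gauss] by blast
  have chY0: "\<And>u. char (distr N borel (Y 0)) u = gchar m0 v0 u"
    using chX0 same_init by (simp add: distr_lborel_borel)
  have chG: "\<And>u. char (distr M borel G) u = gchar J (sigma\<^sup>2) u"
  proof -
    fix u
    have "distr M borel G = density lborel (normal_density J sigma)"
      using G by (simp add: distributed_def distr_lborel_borel)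
    thus "char (distr M borel G) u = gchar J (sigma\<^sup>2) u" by (simp add: char_normal[OF sigma])
  qed

  have qXc: "\<And>t. continuous_on {0..t} (qX t)" unfolding qX_def by (intro continuous_intros)
  have qYc: "\<And>t. continuous_on {0..t} (qYY t)"
    unfolding qYY_def qY_def using fY_cont[OF lam] fY'_cont[OF lam] by (intro continuous_intros) auto
  have key: "\<exists>\<mu> v. v \<ge> 0 \<and> (\<forall>u. char (distr M borel (\<lambda>\<omega>. \<Sum>t\<in>F. c t * X t \<omega>)) u = gchar \<mu> v u)
                \<and> (\<forall>u. char (distr N borel (\<lambda>\<omega>. \<Sum>t\<in>F. c t * Y t \<omega>)) u = gchar \<mu> v u)"
    if F: "finite F" "F \<subseteq> {0..}" for F c
  proof -
    define aF where "aF = (\<Sum>t\<in>F. c t * exp (- t))"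
    define bF where "bF = (\<Sum>t\<in>F. c t * (1 - exp (- t)))"
    define VX where "VX = (\<Sum>s\<in>F. \<Sum>t\<in>F. c s * c t * integral {0..min s t} (\<lambda>w. kern lam qX s w * kern lam qX t w))"
    define VY where "VY = (\<Sum>s\<in>F. \<Sum>t\<in>F. c s * c t * integral {0..min s t} (\<lambda>w. kern lam qYY s w * kern lam qYY t w))"
    define \<mu> where "\<mu> = aF * m0 + bF * J"
    define v where "v = aF\<^sup>2 * v0 + bF\<^sup>2 * sigma\<^sup>2 + VX"
    have ZXm: "(\<lambda>\<omega>. \<Sum>t\<in>F. c t * X t \<omega>) \<in> borel_measurable M" by measurable
    have ZYm: "(\<lambda>\<omega>. \<Sum>t\<in>F. c t * Y t \<omega>) \<in> borel_measurable N" by measurable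
    have IXm: "(\<lambda>\<omega>. aF * X 0 \<omega> + bF * G \<omega>) \<in> borel_measurable M" by measurable
    have IYm: "(\<lambda>\<omega>. aF * Y 0 \<omega> + bF * J) \<in> borel_measurable N" by measurable
    have ZeqX: "AE \<omega> in M. (\<Sum>t\<in>F. c t * X t \<omega>) = (aF * X 0 \<omega> + bF * G \<omega>)
        + (\<Sum>t\<in>F. c t * (lam * B t \<omega> + integral {0..t} (\<lambda>w. qX t w * B w \<omega>)))"
      using AE_X
    proof eventually_elim
      case (elim \<omega>)
      have "(\<Sum>t\<in>F. c t * X t \<omega>) = (\<Sum>t\<in>F. c t * (exp (- t) * X 0 \<omega> + (1 - exp (- t)) * G \<omega>
           + (lam * B t \<omega> + integral {0..t} (\<lambda>w. qX t w * B w \<omega>))))"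
      proof (rule sum.cong[OF refl])
        fix t assume "t \<in> F"
        hence "t \<ge> 0" using F by auto
        from elim[rule_format, OF this] show "c t * X t \<omega> = c t * (exp (- t) * X 0 \<omega> + (1 - exp (- t)) * G \<omega>
           + (lam * B t \<omega> + integral {0..t} (\<lambda>w. qX t w * B w \<omega>)))" by (rule arg_cong)
      qed
      thus ?case unfolding sum_lin3 aF_def bF_def by simp
    qed
    have ZeqY: "AE \<omega> in N. (\<Sum>t\<in>F. c t * Y t \<omega>) = (aF * Y 0 \<omega> + bF * J)
        + (\<Sum>t\<in>F. c t * (lam * W t \<omega> + integral {0..t} (\<lambda>w. qYY t w * W w \<omega>)))"
      using AE_Y
    proof eventually_elim
      case (elim \<omega>)
      have "(\<Sum>t\<in>F. c t * Y t \<omega>) = (\<Sum>t\<in>F. c t * (exp (- t) * Y 0 \<omega> + (1 - exp (- t)) * J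
           + (lam * W t \<omega> + integral {0..t} (\<lambda>w. qYY t w * W w \<omega>))))"
      proof (rule sum.cong[OF refl])
        fix t assume "t \<in> F"
        hence "t \<ge> 0" using F by auto
        from elim[rule_format, OF this] show "c t * Y t \<omega> = c t * (exp (- t) * Y 0 \<omega> + (1 - exp (- t)) * J
           + (lam * W t \<omega> + integral {0..t} (\<lambda>w. qYY t w * W w \<omega>)))" by (rule arg_cong)
      qed
      thus ?case unfolding sum_lin3 aF_def bF_def by simp
    qed
    have chX: "char (distr M borel (\<lambda>\<omega>. \<Sum>t\<in>F. c t * X t \<omega>)) u = gchar \<mu> v u" for u
    proof -
      have "char (distr M borel (\<lambda>\<omega>. \<Sum>t\<in>F. c t * X t \<omega>)) u
          = char (distr M borel (\<lambda>\<omega>. aF * X 0 \<omega> + bF * G \<omega>)) u * gchar 0 VX u"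
        unfolding VX_def
      proof (rule main_char[OF B F qXc IXm ZXm ZeqX])
        fix n :: nat and x \<gamma> :: "nat \<Rightarrow> real" assume "\<forall>i<n. x i < x (Suc i)" "0 \<le> x 0"
        thus "(CLINT \<omega>|M. iexp (u * (aF * X 0 \<omega> + bF * G \<omega> + (\<Sum>k<n. \<gamma> k * (B (x (Suc k)) \<omega> - B (x k) \<omega>)))))
            = (CLINT \<omega>|M. iexp (u * (aF * X 0 \<omega> + bF * G \<omega>))) * (CLINT \<omega>|M. iexp (u * (\<Sum>k<n. \<gamma> k * (B (x (Suc k)) \<omega> - B (x k) \<omega>))))"
          by (rule indX_aux[OF M indep_XGB Xm Gm Bm])
      qed
      also have "char (distr M borel (\<lambda>\<omega>. aF * X 0 \<omega> + bF * G \<omega>)) u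
          = char (distr M borel (X 0)) (u * aF) * char (distr M borel G) (u * bF)"
        by (rule charX_aux[OF M indep_XGB Xm Gm Bm])
      also have "\<dots> = gchar (aF * m0) (aF\<^sup>2 * v0) u * gchar (bF * J) (bF\<^sup>2 * sigma\<^sup>2) u"
        by (simp add: chX0 chG gchar_scale)
      finally show ?thesis by (simp add: gchar_mult \<mu>_def v_def)
    qed
    have VYX: "VY = VX + sigma\<^sup>2 * bF\<^sup>2"
    proof -
      have "VY = (\<Sum>s\<in>F. \<Sum>t\<in>F. c s * c t * integral {0..min s t} (\<lambda>w. kern lam qX s w * kern lam qX t w)
                 + sigma\<^sup>2 * ((c s * (1 - exp (- s))) * (c t * (1 - exp (- t)))))"
        unfolding VY_def
      proof (intro sum.cong refl)
        fix s t assume "s \<in> F" "t \<in> F"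
        hence "s \<ge> 0" "t \<ge> 0" using F by auto
        note eq = cov_identity[OF lam this, of sigma]
        show "c s * c t * integral {0..min s t} (\<lambda>w. kern lam qYY s w * kern lam qYY t w)
            = c s * c t * integral {0..min s t} (\<lambda>w. kern lam qX s w * kern lam qX t w) + sigma\<^sup>2 * ((c s * (1 - exp (- s))) * (c t * (1 - exp (- t))))"
          unfolding qYY_def qX_def eq by (simp add: algebra_simps)
      qed
      also have "\<dots> = VX + sigma\<^sup>2 * (\<Sum>s\<in>F. \<Sum>t\<in>F. (c s * (1 - exp (- s))) * (c t * (1 - exp (- t))))"
        unfolding VX_def by (simp add: sum.distrib sum_distrib_left)
      also have "(\<Sum>s\<in>F. \<Sum>t\<in>F. (c s * (1 - exp (- s))) * (c t * (1 - exp (- t)))) = bF\<^sup>2"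
        unfolding bF_def power2_eq_square by (rule sum_product[symmetric])
      finally show ?thesis .
    qed
    have chY: "char (distr N borel (\<lambda>\<omega>. \<Sum>t\<in>F. c t * Y t \<omega>)) u = gchar \<mu> v u" for u
    proof -
      have "char (distr N borel (\<lambda>\<omega>. \<Sum>t\<in>F. c t * Y t \<omega>)) u
          = char (distr N borel (\<lambda>\<omega>. aF * Y 0 \<omega> + bF * J)) u * gchar 0 VY u"
        unfolding VY_def
      proof (rule main_char[OF W F qYc IYm ZYm ZeqY])
        fix n :: nat and x \<gamma> :: "nat \<Rightarrow> real" assume "\<forall>i<n. x i < x (Suc i)" "0 \<le> x 0"
        thus "(CLINT \<omega>|N. iexp (u * (aF * Y 0 \<omega> + bF * J + (\<Sum>k<n. \<gamma> k * (W (x (Suc k)) \<omega> - W (x k) \<omega>)))))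
            = (CLINT \<omega>|N. iexp (u * (aF * Y 0 \<omega> + bF * J))) * (CLINT \<omega>|N. iexp (u * (\<Sum>k<n. \<gamma> k * (W (x (Suc k)) \<omega> - W (x k) \<omega>))))"
          by (rule indY_aux[OF N indep3 Ym Wm])
      qed
      also have "char (distr N borel (\<lambda>\<omega>. aF * Y 0 \<omega> + bF * J)) u
          = iexp (u * (bF * J)) * char (distr N borel (Y 0)) (u * aF)"
        by (rule charY_aux[OF N Ym])
      also have "\<dots> = gchar (bF * J) 0 u * gchar (aF * m0) (aF\<^sup>2 * v0) u"
        by (simp add: chY0 gchar_scale) (simp add: gchar_def mult_ac)
      finally show ?thesis by (simp add: gchar_mult \<mu>_def v_def VYX algebra_simps)
    qed
    have "v \<ge> 0" using gchar_nonneg_var[OF M ZXm chX] .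
    thus ?thesis using chX chY by blast
  qed

  have mom: "real_gaussian M (\<lambda>\<omega>. \<Sum>t\<in>F. c t * X t \<omega>) \<and> real_gaussian N (\<lambda>\<omega>. \<Sum>t\<in>F. c t * Y t \<omega>)
      \<and> integrable M (\<lambda>\<omega>. \<Sum>t\<in>F. c t * X t \<omega>) \<and> integrable M (\<lambda>\<omega>. (\<Sum>t\<in>F. c t * X t \<omega>)\<^sup>2)
      \<and> integrable N (\<lambda>\<omega>. \<Sum>t\<in>F. c t * Y t \<omega>) \<and> integrable N (\<lambda>\<omega>. (\<Sum>t\<in>F. c t * Y t \<omega>)\<^sup>2)
      \<and> (\<integral>\<omega>. (\<Sum>t\<in>F. c t * X t \<omega>) \<partial>M) = (\<integral>\<omega>. (\<Sum>t\<in>F. c t * Y t \<omega>) \<partial>N)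
      \<and> (\<integral>\<omega>. (\<Sum>t\<in>F. c t * X t \<omega>)\<^sup>2 \<partial>M) = (\<integral>\<omega>. (\<Sum>t\<in>F. c t * Y t \<omega>)\<^sup>2 \<partial>N)"
    if F: "finite F" "F \<subseteq> {0..}" for F c
  proof -
    obtain \<mu> v where v: "v \<ge> 0" and cX: "\<And>u. char (distr M borel (\<lambda>\<omega>. \<Sum>t\<in>F. c t * X t \<omega>)) u = gchar \<mu> v u"
      and cY: "\<And>u. char (distr N borel (\<lambda>\<omega>. \<Sum>t\<in>F. c t * Y t \<omega>)) u = gchar \<mu> v u"
      using key[OF F, of c] by blast
    have ZXm: "(\<lambda>\<omega>. \<Sum>t\<in>F. c t * X t \<omega>) \<in> borel_measurable M" by measurable
    have ZYm: "(\<lambda>\<omega>. \<Sum>t\<in>F. c t * Y t \<omega>) \<in> borel_measurable N" by measurable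
    show ?thesis using gauss_from_char[OF M ZXm v cX] gauss_from_char[OF N ZYm v cY] by simp
  qed
  have gpX: "gaussian_process M X {0..}" unfolding gaussian_process_def using mom by blast
  have gpY: "gaussian_process N Y {0..}" unfolding gaussian_process_def using mom by blast
  have single: "integrable M (\<lambda>\<omega>. (X t \<omega>)\<^sup>2) \<and> integrable N (\<lambda>\<omega>. (Y t \<omega>)\<^sup>2)
      \<and> (\<integral>\<omega>. X t \<omega> \<partial>M) = (\<integral>\<omega>. Y t \<omega> \<partial>N) \<and> (\<integral>\<omega>. (X t \<omega>)\<^sup>2 \<partial>M) = (\<integral>\<omega>. (Y t \<omega>)\<^sup>2 \<partial>N)"
    if t: "t \<ge> 0" for t
    using mom[of "{t}" "\<lambda>_. 1"] t by simp
  have means: "\<forall>t\<ge>0. prob_space.expectation M (X t) = prob_space.expectation N (Y t)"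
    using single by simp
  have covs: "\<forall>s\<ge>0. \<forall>t\<ge>0.
            prob_space.expectation M (\<lambda>\<omega>. X s \<omega> * X t \<omega>)
              - prob_space.expectation M (X s) * prob_space.expectation M (X t)
          = prob_space.expectation N (\<lambda>\<omega>. Y s \<omega> * Y t \<omega>)
              - prob_space.expectation N (Y s) * prob_space.expectation N (Y t)"
  proof (intro allI impI)
    fix s t :: real assume s: "s \<ge> 0" and t: "t \<ge> 0"
    have e1: "(\<integral>\<omega>. X s \<omega> * X t \<omega> \<partial>M) = (\<integral>\<omega>. Y s \<omega> * Y t \<omega> \<partial>N)"
    proof (cases "s = t")
      case True
      thus ?thesis using single[OF s] by (simp add: power2_eq_square)
    next
      case False
      have st: "integrable M (\<lambda>\<omega>. (X s \<omega> + X t \<omega>)\<^sup>2) \<and> integrable N (\<lambda>\<omega>. (Y s \<omega> + Y t \<omega>)\<^sup>2)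
          \<and> (\<integral>\<omega>. (X s \<omega> + X t \<omega>)\<^sup>2 \<partial>M) = (\<integral>\<omega>. (Y s \<omega> + Y t \<omega>)\<^sup>2 \<partial>N)"
        using mom[of "{s, t}" "\<lambda>_. 1"] s t False by simp
      have "(\<integral>\<omega>. X s \<omega> * X t \<omega> \<partial>M) = ((\<integral>\<omega>. (X s \<omega> + X t \<omega>)\<^sup>2 \<partial>M) - (\<integral>\<omega>. (X s \<omega>)\<^sup>2 \<partial>M) - (\<integral>\<omega>. (X t \<omega>)\<^sup>2 \<partial>M)) / 2"
        by (rule cross_moment) (use st single[OF s] single[OF t] in auto)
      also have "\<dots> = ((\<integral>\<omega>. (Y s \<omega> + Y t \<omega>)\<^sup>2 \<partial>N) - (\<integral>\<omega>. (Y s \<omega>)\<^sup>2 \<partial>N) - (\<integral>\<omega>. (Y t \<omega>)\<^sup>2 \<partial>N)) / 2"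
        using st single[OF s] single[OF t] by simp
      also have "\<dots> = (\<integral>\<omega>. Y s \<omega> * Y t \<omega> \<partial>N)"
        by (rule cross_moment[symmetric]) (use st single[OF s] single[OF t] in auto)
      finally show ?thesis .
    qed
    thus "prob_space.expectation M (\<lambda>\<omega>. X s \<omega> * X t \<omega>)
              - prob_space.expectation M (X s) * prob_space.expectation M (X t)
          = prob_space.expectation N (\<lambda>\<omega>. Y s \<omega> * Y t \<omega>)
              - prob_space.expectation N (Y s) * prob_space.expectation N (Y t)"
      using single[OF s] single[OF t] by simp
  qed
  show ?thesis using gpX gpY means covs by blast
qed

end
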